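(* Let $T$ be a finite tree with vertex set $\{u_1,\dots,u_n\}$, and let \[\cdots\to R^c(-4)\oplus R^b(-3)\to R^q(-2)\to R\to R/I(L(T))\to 0\] be the minimal graded free resolution of $R/I(L(T))$ (so $b=\beta_{2,3}(R/I(L(T)))$). Then \[b=\sum_{\{u_i,u_j\}\in E(T)}\binom{\deg u_i+\deg u_j-2}{2}-\sum_{i=1}^n\binom{\deg u_i}{3}.\]
   Context: Degrees are taken in $T$. The line graph $L(T)$ has vertex set $E(T)$, two vertices adjacent iff the corresponding edges share a vertex. $R=\Bbbk[e_{uv}:\{u,v\}\in E(T)]$ for a field $\Bbbk$, and $I(L(T))=\langle e_fe_g: f\neq g\in E(T),\ f\cap g\neq\emptyset\rangle$ is the edge ideal of $L(T)$. *)

theory Defs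
  imports Main "HOL-Library.Poly_Mapping"
begin

definition simple_graph :: "'v set \<Rightarrow> 'v set set \<Rightarrow> bool" where
  "simple_graph V E \<longleftrightarrow> finite V \<and> (\<forall>e\<in>E. \<exists>x y. x \<in> V \<and> y \<in> V \<and> x \<noteq> y \<and> e = {x, y})"

definition graph_connected :: "'v set \<Rightarrow> 'v set set \<Rightarrow> bool" where
  "graph_connected V E \<longleftrightarrow> (\<forall>x\<in>V. \<forall>y\<in>V. (\<lambda>a b. {a, b} \<in> E)\<^sup>*\<^sup>* x y)"

definition graph_acyclic :: "'v set \<Rightarrow> 'v set set \<Rightarrow> bool" where
  "graph_acyclic V E \<longleftrightarrow> \<not> (\<exists>cs. 3 \<le> length cs \<and> distinct cs \<and> set cs \<subseteq> V \<and>
       (\<forall>i < length cs. {cs ! i, cs ! ((i + 1) mod length cs)} \<in> E))"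

definition is_tree :: "'v set \<Rightarrow> 'v set set \<Rightarrow> bool" where
  "is_tree V E \<longleftrightarrow> simple_graph V E \<and> V \<noteq> {} \<and> graph_connected V E \<and> graph_acyclic V E"

definition vdeg :: "'v set set \<Rightarrow> 'v \<Rightarrow> nat" where
  "vdeg E u = card {e \<in> E. u \<in> e}"

type_synonym ('x, 'k) mpoly = "('x \<Rightarrow>\<^sub>0 nat) \<Rightarrow>\<^sub>0 'k"

definition var :: "'x \<Rightarrow> ('x, 'k::comm_ring_1) mpoly" where
  "var x = Poly_Mapping.single (Poly_Mapping.single x 1) 1"

definition mon_deg :: "('x \<Rightarrow>\<^sub>0 nat) \<Rightarrow> nat" where
  "mon_deg m = sum (Poly_Mapping.lookup m) (Poly_Mapping.keys m)"

text \<open>p is homogeneous of (standard) degree d (the zero polynomial is homogeneous of every degree).\<close>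
definition homog :: "nat \<Rightarrow> ('x, 'k::zero) mpoly \<Rightarrow> bool" where
  "homog d p \<longleftrightarrow> (\<forall>m \<in> Poly_Mapping.keys p. mon_deg m = d)"

definition in_ring :: "'x set \<Rightarrow> ('x, 'k::zero) mpoly \<Rightarrow> bool" where
  "in_ring X p \<longleftrightarrow> (\<forall>m \<in> Poly_Mapping.keys p. Poly_Mapping.keys m \<subseteq> X)"

definition ideal_gen :: "'x set \<Rightarrow> ('x, 'k::comm_ring_1) mpoly set \<Rightarrow> ('x, 'k) mpoly set" where
  "ideal_gen X G = {p. \<exists>F c. finite F \<and> F \<subseteq> G \<and> (\<forall>s\<in>F. in_ring X (c s)) \<and> p = (\<Sum>s\<in>F. c s * s)}"

text \<open>Edge ideal of the line graph L(T): generated by e_f e_g for distinct edges f, g sharing a vertex.\<close>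
definition line_edge_ideal :: "'v set set \<Rightarrow> ('v set, 'k::comm_ring_1) mpoly set" where
  "line_edge_ideal E = ideal_gen E {var f * var g | f g. f \<in> E \<and> g \<in> E \<and> f \<noteq> g \<and> f \<inter> g \<noteq> {}}"

text \<open>
  A graded free resolution of R/I, R = k[X], is encoded by
  r i   : rank of F_i,
  a i j : shift of the j-th basis element of F_i (j < r i), i.e. F_i = \<Oplus>_j R(-a i j),
  M i k j (i \<ge> 1) : the (k,j) matrix entry of the differential F_i \<rightarrow> F_(i-1),
          i.e. the image of the j-th basis vector of F_i has k-th coordinate M i k j.
  Elements of F_i are vectors nat \<Rightarrow> polynomial supported on {..< r i} with entries in R.
\<close>

definition vec_in :: "'x set \<Rightarrow> nat \<Rightarrow> (nat \<Rightarrow> ('x, 'k::zero) mpoly) \<Rightarrow> bool" where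
  "vec_in X n v \<longleftrightarrow> (\<forall>j<n. in_ring X (v j)) \<and> (\<forall>j\<ge>n. v j = 0)"

definition diff_apply ::
  "(nat \<Rightarrow> nat) \<Rightarrow> (nat \<Rightarrow> nat \<Rightarrow> nat \<Rightarrow> ('x, 'k::comm_ring_1) mpoly) \<Rightarrow> nat
    \<Rightarrow> (nat \<Rightarrow> ('x, 'k) mpoly) \<Rightarrow> (nat \<Rightarrow> ('x, 'k) mpoly)" where
  "diff_apply r M i v = (\<lambda>k. if k < r (i - 1) then (\<Sum>j<r i. M i k j * v j) else 0)"

definition diff_image ::
  "'x set \<Rightarrow> (nat \<Rightarrow> nat) \<Rightarrow> (nat \<Rightarrow> nat \<Rightarrow> nat \<Rightarrow> ('x, 'k::comm_ring_1) mpoly) \<Rightarrow> nat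
    \<Rightarrow> (nat \<Rightarrow> ('x, 'k) mpoly) set" where
  "diff_image X r M i = diff_apply r M i ` {v. vec_in X (r i) v}"

definition diff_kernel ::
  "'x set \<Rightarrow> (nat \<Rightarrow> nat) \<Rightarrow> (nat \<Rightarrow> nat \<Rightarrow> nat \<Rightarrow> ('x, 'k::comm_ring_1) mpoly) \<Rightarrow> nat
    \<Rightarrow> (nat \<Rightarrow> ('x, 'k) mpoly) set" where
  "diff_kernel X r M i = {v. vec_in X (r i) v \<and> diff_apply r M i v = (\<lambda>_. 0)}"

definition min_graded_free_res ::
  "'x set \<Rightarrow> ('x, 'k::comm_ring_1) mpoly set \<Rightarrow> (nat \<Rightarrow> nat) \<Rightarrow> (nat \<Rightarrow> nat \<Rightarrow> int)
    \<Rightarrow> (nat \<Rightarrow> nat \<Rightarrow> nat \<Rightarrow> ('x, 'k) mpoly) \<Rightarrow> bool" where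
  "min_graded_free_res X I r a M \<longleftrightarrow>
     \<comment> \<open>F_0 = R\<close>
     r 0 = 1 \<and> a 0 0 = 0 \<and>
     \<comment> \<open>entries lie in R, differentials are homogeneous of degree 0, and minimal
        (image of F_i lies in m F_(i-1), m the homogeneous maximal ideal)\<close>
     (\<forall>i\<ge>1. \<forall>k<r (i - 1). \<forall>j<r i.
        in_ring X (M i k j) \<and>
        (if a (i - 1) k \<le> a i j then homog (nat (a i j - a (i - 1) k)) (M i k j) else M i k j = 0) \<and>
        Poly_Mapping.lookup (M i k j) 0 = 0) \<and>
     \<comment> \<open>cokernel of F_1 \<rightarrow> F_0 = R is R/I\<close>
     diff_image X r M 1 = {v. vec_in X 1 v \<and> v 0 \<in> I} \<and>
     \<comment> \<open>exactness at F_i, i \<ge> 1\<close>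
     (\<forall>i\<ge>1. diff_kernel X r M i = diff_image X r M (i + 1))"

end

theory Submission
  imports Defs "HOL-Library.Function_Algebras" "HOL.Vector_Spaces"
begin


definition cst :: "'k \<Rightarrow> ('x, 'k::comm_ring_1) mpoly" where
  "cst c = Poly_Mapping.single 0 c"

lemma lookup_cst_mult: "Poly_Mapping.lookup (cst c * p) m = c * Poly_Mapping.lookup p m"
  unfolding cst_def mult_map_scale_conv_mult[symmetric]
  by (simp add: Poly_Mapping.map.rep_eq when_def)

lemma cst_mult: "cst (a * b) = (cst a * cst b :: ('x,'k::comm_ring_1) mpoly)"
  by (simp add: cst_def mult_single)
lemma cst_add: "cst (a + b) = (cst a + cst b :: ('x,'k::comm_ring_1) mpoly)"
  by (simp add: cst_def single_add)
lemma cst_1[simp]: "cst 1 = (1 :: ('x,'k::comm_ring_1) mpoly)"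
  by (simp add: cst_def)
lemma cst_0[simp]: "cst 0 = (0 :: ('x,'k::comm_ring_1) mpoly)"
  by (simp add: cst_def)

lemma keys_add_nat: "Poly_Mapping.keys (a + b :: 'x \<Rightarrow>\<^sub>0 nat) = Poly_Mapping.keys a \<union> Poly_Mapping.keys b"
  by (auto simp: in_keys_iff lookup_add)

lemma mon_deg_sum: "finite A \<Longrightarrow> Poly_Mapping.keys m \<subseteq> A \<Longrightarrow> mon_deg m = sum (Poly_Mapping.lookup m) A"
  unfolding mon_deg_def by (rule sum.mono_neutral_left) (auto simp: in_keys_iff)

lemma mon_deg_add[simp]: "mon_deg (a + b) = mon_deg a + mon_deg b"
proof -
  let ?K = "Poly_Mapping.keys a \<union> Poly_Mapping.keys b"
  have "mon_deg (a+b) = sum (Poly_Mapping.lookup (a+b)) ?K"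
    by (rule mon_deg_sum) (auto simp: keys_add_nat)
  also have "\<dots> = sum (Poly_Mapping.lookup a) ?K + sum (Poly_Mapping.lookup b) ?K"
    by (simp add: lookup_add sum.distrib)
  also have "\<dots> = mon_deg a + mon_deg b"
    by (simp add: mon_deg_sum[symmetric])
  finally show ?thesis .
qed

lemma mon_deg_single[simp]: "mon_deg (Poly_Mapping.single x k) = k"
  unfolding mon_deg_def by (cases "k = 0") auto

lemma mon_deg_0[simp]: "mon_deg 0 = 0"
  unfolding mon_deg_def by simp

lemma mon_deg_eq_0: "mon_deg m = 0 \<longleftrightarrow> m = 0"
proof
  assume "mon_deg m = 0"
  then have "\<forall>x\<in>Poly_Mapping.keys m. Poly_Mapping.lookup m x = 0"
    unfolding mon_deg_def by simp
  then show "m = 0" by (metis in_keys_iff keys_eq_empty equals0I)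
qed simp

lemma mon_deg_eq_1: "mon_deg m = 1 \<Longrightarrow> \<exists>x. m = Poly_Mapping.single x 1"
proof -
  assume a: "mon_deg m = 1"
  then have "m \<noteq> 0" by auto
  then obtain x where x: "x \<in> Poly_Mapping.keys m" by (metis keys_eq_empty equals0I)
  have "mon_deg m = Poly_Mapping.lookup m x + sum (Poly_Mapping.lookup m) (Poly_Mapping.keys m - {x})"
    unfolding mon_deg_def using x by (simp add: sum.remove)
  moreover have "Poly_Mapping.lookup m x \<ge> 1" using x by (simp add: in_keys_iff)
  ultimately have 1: "Poly_Mapping.lookup m x = 1" and 0: "sum (Poly_Mapping.lookup m) (Poly_Mapping.keys m - {x}) = 0"
    using a by linarith+
  from 0 have "\<forall>y\<in>Poly_Mapping.keys m - {x}. Poly_Mapping.lookup m y = 0" by simp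
  then have "\<forall>y. y \<noteq> x \<longrightarrow> Poly_Mapping.lookup m y = 0" by (auto simp: in_keys_iff)
  with 1 have "m = Poly_Mapping.single x 1"
    by (intro poly_mapping_eqI) (auto simp: lookup_single when_def)
  then show ?thesis by blast
qed

definition hc :: "nat \<Rightarrow> ('x, 'k::comm_ring_1) mpoly \<Rightarrow> ('x, 'k) mpoly" where
  "hc d p = Abs_poly_mapping (\<lambda>m. if mon_deg m = d then Poly_Mapping.lookup p m else 0)"

lemma lookup_hc: "Poly_Mapping.lookup (hc d p) m = (if mon_deg m = d then Poly_Mapping.lookup p m else 0)"
proof -
  have "finite {m. (if mon_deg m = d then Poly_Mapping.lookup p m else 0) \<noteq> 0}"
    by (rule finite_subset[of _ "Poly_Mapping.keys p"]) (auto simp: in_keys_iff)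
  then show ?thesis unfolding hc_def by simp
qed

lemma hc_notin: "d \<notin> mon_deg ` Poly_Mapping.keys p \<Longrightarrow> hc d p = 0"
  by (rule poly_mapping_eqI) (auto simp: lookup_hc in_keys_iff)

lemma hc_add: "hc d (p + q) = hc d p + hc d q"
  by (rule poly_mapping_eqI) (simp add: lookup_hc lookup_add)
lemma hc_0[simp]: "hc d 0 = 0"
  by (rule poly_mapping_eqI) (simp add: lookup_hc)
lemma hc_sum: "hc d (sum f A) = sum (\<lambda>i. hc d (f i)) A"
  by (induction A rule: infinite_finite_induct) (auto simp: hc_add)
lemma hc_cst_mult: "hc d (cst c * p) = cst c * hc d p"
  by (rule poly_mapping_eqI) (simp add: lookup_hc lookup_cst_mult)
lemma hc_diff: "hc d (p - q) = hc d p - hc d q"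
  by (rule poly_mapping_eqI) (simp add: lookup_hc lookup_minus)

lemma keys_hc: "Poly_Mapping.keys (hc d p) \<subseteq> Poly_Mapping.keys p"
  by (auto simp: in_keys_iff lookup_hc split: if_splits)

lemma homog_hc: "homog d (hc d p)"
  unfolding homog_def by (auto simp: in_keys_iff lookup_hc split: if_splits)

lemma homog_iff_hc: "homog d p \<longleftrightarrow> hc d p = p"
  unfolding homog_def
  by (auto simp: poly_mapping_eq_iff fun_eq_iff lookup_hc in_keys_iff)

lemma hc_homog: "homog e p \<Longrightarrow> hc d p = (if d = e then p else 0)"
  unfolding homog_def
  by (auto simp: poly_mapping_eq_iff fun_eq_iff lookup_hc in_keys_iff)

lemma hc_decomp: "p = (\<Sum>d\<in>mon_deg ` Poly_Mapping.keys p. hc d p)"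
proof (rule poly_mapping_eqI)
  fix m
  have "Poly_Mapping.lookup (\<Sum>d\<in>mon_deg ` Poly_Mapping.keys p. hc d p) m
      = (\<Sum>d\<in>mon_deg ` Poly_Mapping.keys p. if mon_deg m = d then Poly_Mapping.lookup p m else 0)"
    by (simp add: lookup_sum lookup_hc)
  also have "\<dots> = Poly_Mapping.lookup p m"
    by (cases "m \<in> Poly_Mapping.keys p") (auto simp: sum.delta in_keys_iff)
  finally show "Poly_Mapping.lookup p m = Poly_Mapping.lookup (\<Sum>d\<in>mon_deg ` Poly_Mapping.keys p. hc d p) m" by simp
qed

lemma hc_decomp': "finite D \<Longrightarrow> mon_deg ` Poly_Mapping.keys p \<subseteq> D \<Longrightarrow> p = (\<Sum>d\<in>D. hc d p)"
proof -
  assume D: "finite D" "mon_deg ` Poly_Mapping.keys p \<subseteq> D"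
  have "(\<Sum>d\<in>D. hc d p) = (\<Sum>d\<in>mon_deg ` Poly_Mapping.keys p. hc d p)"
  proof (rule sum.mono_neutral_right[OF D(1) D(2)], rule ballI)
    fix d assume "d \<in> D - mon_deg ` Poly_Mapping.keys p"
    then show "hc d p = 0" by (intro hc_notin) auto
  qed
  then show ?thesis using hc_decomp[of p] by simp
qed

lemma homog_mult: "homog a p \<Longrightarrow> homog b q \<Longrightarrow> homog (a + b) (p * q)"
  unfolding homog_def using keys_mult[of p q] by fastforce

lemma homog_0[simp]: "homog d 0" unfolding homog_def by simp
lemma homog_add: "homog d p \<Longrightarrow> homog d q \<Longrightarrow> homog d (p + q)"
  unfolding homog_def using keys_add[of p q] by blast
lemma homog_sum: "(\<And>i. i \<in> A \<Longrightarrow> homog d (f i)) \<Longrightarrow> homog d (sum f A)"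
  by (induction A rule: infinite_finite_induct) (auto intro: homog_add)
lemma homog_cst_mult: "homog d p \<Longrightarrow> homog d (cst c * p)"
  unfolding homog_def by (auto simp: in_keys_iff lookup_cst_mult)
lemma homog_cst: "homog 0 (cst c)"
  unfolding homog_def cst_def by (auto simp: in_keys_iff lookup_single when_def split: if_splits)

lemma hc_mult_homog:
  assumes "homog e q"
  shows "hc n (q * w) = (if e \<le> n then q * hc (n - e) w else 0)"
proof -
  let ?D = "mon_deg ` Poly_Mapping.keys w"
  have "q * w = (\<Sum>d\<in>?D. q * hc d w)"
    by (subst hc_decomp[of w]) (simp add: sum_distrib_left)
  then have "hc n (q * w) = (\<Sum>d\<in>?D. hc n (q * hc d w))" by (simp add: hc_sum)
  also have "\<dots> = (\<Sum>d\<in>?D. if d = n - e \<and> e \<le> n then q * hc d w else 0)"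
  proof (rule sum.cong[OF refl])
    fix d
    have "homog (e + d) (q * hc d w)" by (rule homog_mult[OF assms homog_hc])
    then show "hc n (q * hc d w) = (if d = n - e \<and> e \<le> n then q * hc d w else 0)"
      by (auto simp: hc_homog)
  qed
  also have "\<dots> = (if e \<le> n then q * hc (n - e) w else 0)"
  proof (cases "e \<le> n")
    case True
    show ?thesis
    proof (cases "n - e \<in> ?D")
      case True
      then show ?thesis using \<open>e \<le> n\<close> by (simp add: sum.delta)
    next
      case False
      then have "hc (n - e) w = 0" by (rule hc_notin)
      then show ?thesis using False by (simp add: sum.delta)
    qed
  qed simp
  finally show ?thesis .
qed

lemma hc_0_cst: "hc 0 p = cst (Poly_Mapping.lookup p 0)"
  by (rule poly_mapping_eqI) (auto simp: lookup_hc cst_def lookup_single when_def mon_deg_eq_0)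

lemma hc_0_mult: "hc 0 (p * w) = hc 0 p * hc 0 w"
proof -
  let ?D = "mon_deg ` Poly_Mapping.keys p"
  have "p * w = (\<Sum>d\<in>?D. hc d p * w)"
    by (subst hc_decomp[of p]) (simp add: sum_distrib_right)
  then have "hc 0 (p * w) = (\<Sum>d\<in>?D. hc 0 (hc d p * w))" by (simp add: hc_sum)
  also have "\<dots> = (\<Sum>d\<in>?D. if d = 0 then hc d p * hc 0 w else 0)"
    by (rule sum.cong[OF refl]) (simp add: hc_mult_homog[OF homog_hc])
  also have "\<dots> = hc 0 p * hc 0 w"
  proof (cases "0 \<in> ?D")
    case False
    then have "hc 0 p = 0" by (rule hc_notin)
    then show ?thesis using False by (simp add: sum.delta)
  qed (simp add: sum.delta)
  finally show ?thesis .
qed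

lemma lookup_mult_0: "Poly_Mapping.lookup (p * w :: ('x,'k::comm_ring_1) mpoly) 0 = Poly_Mapping.lookup p 0 * Poly_Mapping.lookup w 0"
proof -
  have "cst (Poly_Mapping.lookup (p * w) 0) = (cst (Poly_Mapping.lookup p 0 * Poly_Mapping.lookup w 0) :: ('x,'k) mpoly)"
    using hc_0_mult[of p w] by (simp add: hc_0_cst cst_mult)
  then have "Poly_Mapping.lookup (cst (Poly_Mapping.lookup (p * w) 0) :: ('x,'k) mpoly) 0 = Poly_Mapping.lookup (cst (Poly_Mapping.lookup p 0 * Poly_Mapping.lookup w 0) :: ('x,'k) mpoly) 0"
    by (rule arg_cong)
  then show ?thesis by (simp add: cst_def)
qed

lemma homog0_const0: "homog 0 (p::('x,'k::comm_ring_1) mpoly) \<Longrightarrow> Poly_Mapping.lookup p 0 = 0 \<Longrightarrow> p = 0"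
proof -
  assume h: "homog 0 p" and l: "Poly_Mapping.lookup p 0 = 0"
  have "p = hc 0 p" using h homog_iff_hc by metis
  also have "\<dots> = 0" by (simp only: hc_0_cst l cst_0)
  finally show "p = 0" .
qed

lemma in_ring_0[simp]: "in_ring X 0" unfolding in_ring_def by simp
lemma in_ring_1[simp]: "in_ring X 1" unfolding in_ring_def by simp
lemma in_ring_cst[simp]: "in_ring X (cst c)" unfolding in_ring_def cst_def
  by (simp add: keys_single)
lemma in_ring_add: "in_ring X p \<Longrightarrow> in_ring X q \<Longrightarrow> in_ring X (p + q)"
  unfolding in_ring_def using keys_add[of p q] by blast
lemma in_ring_uminus: "in_ring X (p::('x,'k::ab_group_add) mpoly) \<Longrightarrow> in_ring X (- p)"
  unfolding in_ring_def by simp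
lemma in_ring_diff: assumes "in_ring X p" "in_ring X (q::('x,'k::ab_group_add) mpoly)" shows "in_ring X (p - q)"
proof -
  have "in_ring X (p + (- q))" using assms by (intro in_ring_add in_ring_uminus)
  then show ?thesis by simp
qed
lemma in_ring_sum: "(\<And>i. i \<in> A \<Longrightarrow> in_ring X (f i)) \<Longrightarrow> in_ring X (sum f A)"
  by (induction A rule: infinite_finite_induct) (auto intro: in_ring_add)
lemma in_ring_mult:
  assumes "in_ring X p" "in_ring X q" shows "in_ring X (p * q)"
  unfolding in_ring_def
proof
  fix m assume "m \<in> Poly_Mapping.keys (p * q)"
  then obtain a b where "m = a + b" "a \<in> Poly_Mapping.keys p" "b \<in> Poly_Mapping.keys q"
    using keys_mult[of p q] by blast
  then show "Poly_Mapping.keys m \<subseteq> X" using assms unfolding in_ring_def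
    by (simp add: keys_add_nat)
qed
lemma in_ring_hc: "in_ring X p \<Longrightarrow> in_ring X (hc d p)"
  unfolding in_ring_def using keys_hc by blast
lemma in_ring_var: "x \<in> X \<Longrightarrow> in_ring X (var x)"
  unfolding in_ring_def var_def by simp

lemma var_mult: "var x * var y = Poly_Mapping.single (Poly_Mapping.single x 1 + Poly_Mapping.single y 1) (1::'k::comm_ring_1)"
  unfolding var_def by (simp add: mult_single)

lemma homog_var: "homog 1 (var x)"
  unfolding homog_def var_def by simp


context vector_space begin

lemma indep_family:
  assumes J: "finite J"
    and H: "\<And>a. (\<Sum>j\<in>J. a j *s u j) = 0 \<Longrightarrow> \<forall>j\<in>J. a j = 0"
  shows "inj_on u J" "independent (u ` J)" "card (u ` J) = card J"
proof -
  show inj: "inj_on u J"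
  proof (rule inj_onI, rule ccontr)
    fix i j assume ij: "i \<in> J" "j \<in> J" "u i = u j" "i \<noteq> j"
    define a where "a k = (if k = i then 1 else if k = j then -1 else (0::'a))" for k
    have "(\<Sum>k\<in>J. a k *s u k) = (\<Sum>k\<in>J. (if k = i then u i else 0) + (if k = j then - u j else 0))"
      by (rule sum.cong) (auto simp: a_def ij(4))
    also have "\<dots> = u i - u j" using ij J by (simp add: sum.distrib sum.delta)
    also have "\<dots> = 0" using ij by simp
    finally have "a i = 0" using H ij(1) by blast
    then show False by (simp add: a_def)
  qed
  show "independent (u ` J)"
  proof (rule independent_if_scalars_zero)
    show "finite (u ` J)" using J by simp
    fix f x assume s: "(\<Sum>x\<in>u ` J. f x *s x) = 0" and x: "x \<in> u ` J"
    have "(\<Sum>j\<in>J. f (u j) *s u j) = 0" using s by (simp add: sum.reindex[OF inj])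
    then have "\<forall>j\<in>J. f (u j) = 0" by (rule H)
    then show "f x = 0" using x by blast
  qed
  show "card (u ` J) = card J" by (rule card_image[OF inj])
qed

lemma span_inter_zero:
  assumes B: "independent B" "finite B" and B0: "B0 \<subseteq> B" and C: "C \<subseteq> B" "B0 \<inter> C = {}"
    and z: "z \<in> span B0" "z \<in> span C"
  shows "z = 0"
proof -
  have fB0: "finite B0" "finite C" using B(2) B0 C(1) finite_subset by blast+
  obtain u where u: "z = (\<Sum>v\<in>B0. u v *s v)" using z(1) span_finite[OF fB0(1)] by auto
  obtain w where w: "z = (\<Sum>v\<in>C. w v *s v)" using z(2) span_finite[OF fB0(2)] by auto
  define c where "c v = (if v \<in> B0 then u v else if v \<in> C then - w v else 0)" for v
  have "(\<Sum>v\<in>B. c v *s v) = (\<Sum>v\<in>B0 \<union> C. c v *s v)"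
    using B0 C B by (intro sum.mono_neutral_right) (auto simp: c_def)
  also have "\<dots> = (\<Sum>v\<in>B0. c v *s v) + (\<Sum>v\<in>C. c v *s v)"
    using fB0 C by (simp add: sum.union_disjoint)
  also have "(\<Sum>v\<in>B0. c v *s v) = z" unfolding u by (rule sum.cong) (auto simp: c_def)
  also have "(\<Sum>v\<in>C. c v *s v) = - z" unfolding w using C
    by (auto simp: c_def sum_negf[symmetric] intro!: sum.cong)
  finally have S: "(\<Sum>v\<in>B. c v *s v) = 0" by simp
  have "\<forall>v\<in>B. c v = 0" using independentD[OF B(1) B(2) subset_refl S] by blast
  then have "\<forall>v\<in>B0. u v = 0" using B0 unfolding c_def by (metis subsetD)
  then show "z = 0" unfolding u by simp
qed

end

context vector_space_pair begin

lemma rank_nullity: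
  assumes add: "\<And>x y. f (x + y) = f x + f y" and scl: "\<And>c x. f (s1 c x) = s2 c (f x)"
    and W: "vs1.subspace W" and T: "finite T" "W \<subseteq> vs1.span T"
  shows "vs1.dim W = vs1.dim {x\<in>W. f x = 0} + vs2.dim (f ` W)"
proof -
  have f0: "f 0 = 0" using add[of 0 0] by simp
  have fsum: "f (sum g A) = (\<Sum>a\<in>A. f (g a))" for g and A :: "'z set"
    by (induction A rule: infinite_finite_induct) (auto simp: f0 add)
  have fdiff: "f (x - y) = f x - f y" for x y
    using add[of "x - y" y] by (simp add: algebra_simps)
  let ?K = "{x\<in>W. f x = 0}"
  obtain B0 where B0: "B0 \<subseteq> ?K" "vs1.independent B0" "?K \<subseteq> vs1.span B0" "card B0 = vs1.dim ?K"
    by (rule vs1.basis_exists)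
  obtain B where B: "B0 \<subseteq> B" "B \<subseteq> W" "vs1.independent B" "W \<subseteq> vs1.span B"
    using B0(1,2) vs1.maximal_independent_subset_extend[of B0 W] by blast
  have finB: "finite B" using vs1.independent_span_bound[OF T(1) B(3)] B(2) T(2) by blast
  have dimW: "vs1.dim W = card B" using vs1.basis_card_eq_dim[OF B(2) B(4) B(3)] by simp
  define C where "C = B - B0"
  have finC: "finite C" using finB by (simp add: C_def)
  have cardC: "card C = card B - card B0" unfolding C_def using B(1) finB
    by (simp add: card_Diff_subset finite_subset)
  have cardle: "card B0 \<le> card B" using B(1) finB by (simp add: card_mono)
  have H: "\<forall>c\<in>C. a c = 0" if s: "(\<Sum>c\<in>C. s2 (a c) (f c)) = 0" for a
  proof -
    let ?x = "\<Sum>c\<in>C. s1 (a c) c"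
    have "f ?x = 0" using s by (simp add: fsum scl)
    moreover have "?x \<in> W" using B(2) W unfolding C_def
      by (intro vs1.subspace_sum vs1.subspace_scale) auto
    ultimately have "?x \<in> vs1.span B0" using B0(3) by blast
    moreover have "?x \<in> vs1.span C" by (intro vs1.span_sum vs1.span_scale vs1.span_base)
    ultimately have x0: "?x = 0"
      using vs1.span_inter_zero[OF B(3) finB B(1), of C ?x] by (auto simp: C_def)
    show ?thesis using vs1.independentD[OF vs1.independent_mono[OF B(3)] finC subset_refl x0]
      by (auto simp: C_def)
  qed
  have fam: "inj_on f C" "vs2.independent (f ` C)" "card (f ` C) = card C"
    using vs2.indep_family[OF finC, of f] H by blast+
  have span: "f ` W \<subseteq> vs2.span (f ` C)"
  proof
    fix y assume "y \<in> f ` W"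
    then obtain x where x: "x \<in> W" "y = f x" by blast
    then have "x \<in> vs1.span B" using B(4) by blast
    then obtain u where u: "x = (\<Sum>v\<in>B. s1 (u v) v)" using vs1.span_finite[OF finB] by auto
    have "y = (\<Sum>v\<in>B. s2 (u v) (f v))" using x u by (simp add: fsum scl)
    also have "\<dots> = (\<Sum>v\<in>C. s2 (u v) (f v))"
    proof (rule sum.mono_neutral_right[OF finB])
      show "C \<subseteq> B" by (auto simp: C_def)
      show "\<forall>i\<in>B - C. s2 (u i) (f i) = 0" using B0(1) by (auto simp: C_def)
    qed
    also have "\<dots> \<in> vs2.span (f ` C)"
      by (intro vs2.span_sum vs2.span_scale vs2.span_base) auto
    finally show "y \<in> vs2.span (f ` C)" .
  qed
  have sub: "f ` C \<subseteq> f ` W" using B(2) by (auto simp: C_def)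
  have "card (f ` C) = vs2.dim (f ` W)" by (rule vs2.basis_card_eq_dim[OF sub span fam(2)])
  then show ?thesis using dimW B0(4) fam(3) cardC cardle by simp
qed

end


lemma sum_fun_apply: "(sum f A) k = (\<Sum>a\<in>A. f a k)"
  by (induction A rule: infinite_finite_induct) auto

definition cs :: "'k::field \<Rightarrow> ('x,'k) mpoly \<Rightarrow> ('x,'k) mpoly" where "cs c p = cst c * p"
definition vcs :: "'k::field \<Rightarrow> (nat \<Rightarrow> ('x,'k) mpoly) \<Rightarrow> (nat \<Rightarrow> ('x,'k) mpoly)" where
  "vcs c v = (\<lambda>k. cst c * v k)"

lemma vs_cs: "vector_space (cs :: 'k::field \<Rightarrow> ('x,'k) mpoly \<Rightarrow> _)"
  by unfold_locales (simp_all add: cs_def cst_add cst_mult algebra_simps)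

lemma vs_vcs: "vector_space (vcs :: 'k::field \<Rightarrow> (nat \<Rightarrow> ('x,'k) mpoly) \<Rightarrow> _)"
  by unfold_locales (simp_all add: vcs_def cst_add cst_mult algebra_simps fun_eq_iff)

interpretation ps: vector_space "cs :: 'k::field \<Rightarrow> ('x,'k) mpoly \<Rightarrow> _" by (rule vs_cs)
interpretation vps: vector_space "vcs :: 'k::field \<Rightarrow> (nat \<Rightarrow> ('x,'k) mpoly) \<Rightarrow> _" by (rule vs_vcs)
interpretation pair: vector_space_pair "vcs :: 'k::field \<Rightarrow> (nat \<Rightarrow> ('x,'k) mpoly) \<Rightarrow> _" "cs :: 'k::field \<Rightarrow> ('x,'k) mpoly \<Rightarrow> _"
  by unfold_locales

lemma single_1_eq[simp]: "Poly_Mapping.single m (1::'a::zero_neq_one) = Poly_Mapping.single m' 1 \<longleftrightarrow> m = m'"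
proof
  assume "Poly_Mapping.single m (1::'a) = Poly_Mapping.single m' 1"
  then have "Poly_Mapping.lookup (Poly_Mapping.single m (1::'a)) m = Poly_Mapping.lookup (Poly_Mapping.single m' 1) m" by simp
  then show "m = m'" by (simp add: lookup_single when_def split: if_splits)
qed simp

lemma single_key_eq: "(a::'a::zero) \<noteq> 0 \<Longrightarrow> Poly_Mapping.single m a = Poly_Mapping.single m' a \<longleftrightarrow> m = m'"
proof
  assume "a \<noteq> 0" "Poly_Mapping.single m a = Poly_Mapping.single m' a"
  then have "Poly_Mapping.lookup (Poly_Mapping.single m a) m = Poly_Mapping.lookup (Poly_Mapping.single m' a) m" by simp
  then show "m = m'" using \<open>a \<noteq> 0\<close> by (simp add: lookup_single when_def split: if_splits)
qed simp

lemma monomials_independent: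
  assumes "finite A" "A \<subseteq> range (\<lambda>m. Poly_Mapping.single m (1::'k::field))"
  shows "ps.independent (A :: ('x,'k) mpoly set)"
proof (rule ps.independent_if_scalars_zero[OF assms(1)])
  fix f x assume s: "(\<Sum>x\<in>A. cs (f x) x) = 0" and x: "x \<in> A"
  obtain m where m: "x = Poly_Mapping.single m 1" using x assms(2) by blast
  have "Poly_Mapping.lookup (\<Sum>x\<in>A. cs (f x) x) m = (\<Sum>y\<in>A. f y * Poly_Mapping.lookup y m)"
    by (simp add: lookup_sum cs_def lookup_cst_mult)
  also have "\<dots> = (\<Sum>y\<in>A. if y = x then f x else 0)"
  proof (rule sum.cong[OF refl])
    fix y assume "y \<in> A"
    then obtain m' where m': "y = Poly_Mapping.single m' 1" using assms(2) by blast
    show "f y * Poly_Mapping.lookup y m = (if y = x then f x else 0)"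
      using m m' by (auto simp: lookup_single when_def)
  qed
  also have "\<dots> = f x" using x assms(1) by simp
  finally show "f x = 0" using s by simp
qed

lemma span_mult:
  assumes p: "p \<in> ps.span A" and q: "q \<in> ps.span B"
  shows "p * q \<in> ps.span {a * b | a b. a \<in> A \<and> b \<in> B}"
  using p
proof (induction rule: ps.span_induct_alt)
  case base then show ?case by (simp add: ps.span_zero)
next
  case (step c x y)
  have "x * q \<in> ps.span {a * b | a b. a \<in> A \<and> b \<in> B}"
    using q
  proof (induction rule: ps.span_induct_alt)
    case base then show ?case by (simp add: ps.span_zero)
  next
    case (step c' x' y')
    have "x * (cs c' x' + y') = cs c' (x * x') + x * y'" by (simp add: cs_def algebra_simps)
    moreover have "x * x' \<in> ps.span {a * b | a b. a \<in> A \<and> b \<in> B}"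
      using step \<open>x \<in> A\<close> by (intro ps.span_base) blast
    ultimately show ?case using step(2) by (simp only:) (intro ps.span_add ps.span_scale)
  qed
  then have "cs c (x * q) + y * q \<in> ps.span {a * b | a b. a \<in> A \<and> b \<in> B}"
    using step by (intro ps.span_add ps.span_scale)
  moreover have "cs c (x * q) + y * q = (cs c x + y) * q" by (simp add: cs_def algebra_simps)
  ultimately show ?case by (simp only:)
qed

lemma lin_form:
  assumes "homog 1 p" "in_ring X p" "finite X"
  shows "p = (\<Sum>x\<in>X. cst (Poly_Mapping.lookup p (Poly_Mapping.single x 1)) * var x)"
proof (rule poly_mapping_eqI)
  fix m
  have "Poly_Mapping.lookup (\<Sum>x\<in>X. cst (Poly_Mapping.lookup p (Poly_Mapping.single x 1)) * var x) m
     = (\<Sum>x\<in>X. if m = Poly_Mapping.single x 1 then Poly_Mapping.lookup p m else 0)"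
    by (rule trans[OF lookup_sum], rule sum.cong)
       (auto simp: lookup_cst_mult var_def lookup_single when_def)
  also have "\<dots> = Poly_Mapping.lookup p m"
  proof (cases "m \<in> Poly_Mapping.keys p")
    case True
    then have "mon_deg m = 1" using assms(1) unfolding homog_def by blast
    then obtain y where y: "m = Poly_Mapping.single y 1" using mon_deg_eq_1 by blast
    then have "y \<in> X" using True assms(2) unfolding in_ring_def by auto
    have "(\<Sum>x\<in>X. if m = Poly_Mapping.single x 1 then Poly_Mapping.lookup p m else 0)
        = (\<Sum>x\<in>X. if x = y then Poly_Mapping.lookup p m else 0)"
      using y by (intro sum.cong) (auto simp: single_key_eq)
    also have "\<dots> = Poly_Mapping.lookup p m" using \<open>y \<in> X\<close> assms(3) by simp
    finally show ?thesis .
  next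
    case False
    then have l0: "Poly_Mapping.lookup p m = 0" by (simp add: in_keys_iff)
    then show ?thesis unfolding l0 by simp
  qed
  finally show "Poly_Mapping.lookup p m = Poly_Mapping.lookup (\<Sum>x\<in>X. cst (Poly_Mapping.lookup p (Poly_Mapping.single x 1)) * var x) m"
    by simp
qed


lemma sum_delta_mult: "finite A \<Longrightarrow> j \<in> A \<Longrightarrow> (\<Sum>l\<in>A. f l * (if l = j then 1 else 0)) = (f j :: 'a::semiring_1)"
proof -
  assume "finite A" "j \<in> A"
  have "(\<Sum>l\<in>A. f l * (if l = j then 1 else 0)) = (\<Sum>l\<in>A. if l = j then f l else 0)"
    by (rule sum.cong) auto
  also have "\<dots> = f j" using \<open>finite A\<close> \<open>j \<in> A\<close> by simp
  finally show ?thesis .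
qed

lemma lookup_hc_0: "1 \<le> e \<Longrightarrow> Poly_Mapping.lookup (hc e p) 0 = 0"
  by (simp add: lookup_hc)

definition ev :: "nat \<Rightarrow> nat \<Rightarrow> ('x, 'k::comm_ring_1) mpoly" where
  "ev j = (\<lambda>l. if l = j then 1 else 0)"

lemma vec_in_ev: "j < n \<Longrightarrow> vec_in E n (ev j)"
  unfolding vec_in_def ev_def by auto

locale mres =
  fixes E :: "'v set set" and r :: "nat \<Rightarrow> nat" and a :: "nat \<Rightarrow> nat \<Rightarrow> int"
    and M :: "nat \<Rightarrow> nat \<Rightarrow> nat \<Rightarrow> ('v set, 'k::field) mpoly"
  assumes res: "min_graded_free_res E (line_edge_ideal E) r a M" and finE: "finite E"
begin

definition G0 :: "('v set, 'k) mpoly set" where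
  "G0 = {var f * var g | f g. f \<in> E \<and> g \<in> E \<and> f \<noteq> g \<and> f \<inter> g \<noteq> {}}"

abbreviation g :: "nat \<Rightarrow> ('v set, 'k) mpoly" where "g j \<equiv> M 1 0 j"

lemma r0: "r 0 = 1" and a00: "a 0 0 = 0"
  using res unfolding min_graded_free_res_def by auto

lemma Mprops: "1 \<le> i \<Longrightarrow> k < r (i - 1) \<Longrightarrow> j < r i \<Longrightarrow> in_ring E (M i k j) \<and>
   (if a (i-1) k \<le> a i j then homog (nat (a i j - a (i-1) k)) (M i k j) else M i k j = 0) \<and>
   Poly_Mapping.lookup (M i k j) 0 = 0"
  using res unfolding min_graded_free_res_def by blast

lemma Mprops1: assumes "j < r 1"
  shows "in_ring E (g j) \<and> (if 0 \<le> a 1 j then homog (nat (a 1 j)) (g j) else g j = 0) \<and> Poly_Mapping.lookup (g j) 0 = 0"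
proof -
  have e: "(1::nat) - 1 = 0" by simp
  have o: "(1::nat) \<le> 1" by simp
  have "0 < r 0" using r0 by simp
  from Mprops[OF o, unfolded e, OF this assms] show ?thesis by (simp add: a00 cong: if_cong)
qed

lemma Mprops2: assumes "k < r 1" "j < r 2"
  shows "in_ring E (M 2 k j) \<and> (if a 1 k \<le> a 2 j then homog (nat (a 2 j - a 1 k)) (M 2 k j) else M 2 k j = 0) \<and> Poly_Mapping.lookup (M 2 k j) 0 = 0"
proof -
  have e: "(2::nat) - 1 = 1" by simp
  have o: "(1::nat) \<le> 2" by simp
  from Mprops[OF o, unfolded e, OF assms] show ?thesis .
qed

lemma img1: "diff_image E r M 1 = {v. vec_in E 1 v \<and> v 0 \<in> line_edge_ideal E}"
  using res unfolding min_graded_free_res_def by blast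

lemma exact: "1 \<le> i \<Longrightarrow> diff_kernel E r M i = diff_image E r M (i + 1)"
  using res unfolding min_graded_free_res_def by blast

lemma no_const_kernel:
  assumes i: "1 \<le> i" and v: "vec_in E (r i) v" and d: "diff_apply r M i v = (\<lambda>_. 0)" and j: "j < r i"
  shows "Poly_Mapping.lookup (v j) 0 = 0"
proof -
  have "v \<in> diff_kernel E r M i" using v d by (simp add: diff_kernel_def)
  then have "v \<in> diff_image E r M (i+1)" using exact[OF i] by simp
  then obtain w where w: "vec_in E (r (i+1)) w" and vw: "v = diff_apply r M (i+1) w"
    unfolding diff_image_def by auto
  have "v j = (\<Sum>l<r (i+1). M (i+1) j l * w l)" using vw j by (simp add: diff_apply_def)
  then have "Poly_Mapping.lookup (v j) 0 = (\<Sum>l<r (i+1). Poly_Mapping.lookup (M (i+1) j l) 0 * Poly_Mapping.lookup (w l) 0)"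
    by (simp add: lookup_sum lookup_mult_0)
  also have "\<dots> = 0"
  proof (intro sum.neutral ballI)
    fix l assume "l \<in> {..<r (i+1)}"
    then have "Poly_Mapping.lookup (M (i+1) j l) 0 = 0" using Mprops[of "i+1" j l] j by simp
    then show "Poly_Mapping.lookup (M (i+1) j l) 0 * Poly_Mapping.lookup (w l) 0 = 0" by simp
  qed
  finally show ?thesis .
qed

lemma diff_apply_ev: "j < r i \<Longrightarrow> diff_apply r M i (ev j) = (\<lambda>k. if k < r (i-1) then M i k j else 0)"
  unfolding diff_apply_def ev_def by (auto simp: fun_eq_iff sum_delta_mult)

lemma ev_in_image: "j < r i \<Longrightarrow> diff_apply r M i (ev j) \<in> diff_image E r M i"
  unfolding diff_image_def using vec_in_ev by blast

lemma g_in_I: "j < r 1 \<Longrightarrow> g j \<in> line_edge_ideal E"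
  using ev_in_image[of j 1] diff_apply_ev[of j 1] img1 r0 by auto

lemma g_in_ring: "j < r 1 \<Longrightarrow> in_ring E (g j)"
  using Mprops1 by blast

lemma g_nonzero: "j < r 1 \<Longrightarrow> g j \<noteq> 0"
proof
  assume j: "j < r 1" and g0: "g j = 0"
  have "diff_apply r M 1 (ev j) = (\<lambda>_. 0)" using diff_apply_ev[OF j] g0 r0 by auto
  moreover have "vec_in E (r 1) (ev j :: nat \<Rightarrow> ('v set, 'k) mpoly)" by (rule vec_in_ev[OF j])
  ultimately have "Poly_Mapping.lookup (ev j j :: ('v set, 'k) mpoly) 0 = 0" using no_const_kernel[of 1 "ev j" j] j by simp
  then show False by (simp add: ev_def)
qed

lemma G0_homog: assumes "s \<in> G0" shows "homog 2 s"
proof -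
  obtain f g where "s = var f * var g" using assms unfolding G0_def by blast
  moreover have "homog (1 + 1) (var f * var g :: ('v set, 'k) mpoly)" by (intro homog_mult homog_var)
  ultimately show ?thesis unfolding one_add_one by simp
qed

lemma G0_in_ring: "s \<in> G0 \<Longrightarrow> in_ring E s"
  unfolding G0_def by (auto intro!: in_ring_mult in_ring_var)

lemma G0_in_I: "s \<in> G0 \<Longrightarrow> s \<in> line_edge_ideal E"
  unfolding line_edge_ideal_def ideal_gen_def
  by (rule CollectI, rule exI[of _ "{s}"], rule exI[of _ "\<lambda>_. 1"]) (auto simp: G0_def)

lemma finite_G0: "finite G0"
proof -
  have "G0 \<subseteq> (\<lambda>(f, g). var f * var g) ` (E \<times> E)" unfolding G0_def by auto
  then show ?thesis using finE finite_subset by blast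
qed

lemma G0_monomials: "G0 \<subseteq> range (\<lambda>m. Poly_Mapping.single m 1)"
  unfolding G0_def by (auto simp: var_mult)

lemma I_struct:
  assumes "p \<in> line_edge_ideal E"
  shows "\<exists>F c. finite F \<and> F \<subseteq> G0 \<and> (\<forall>s\<in>F. in_ring E (c s)) \<and>
     (\<forall>d. hc d p = (if 2 \<le> d then (\<Sum>s\<in>F. hc (d - 2) (c s) * s) else 0))"
proof -
  obtain F c where F: "finite F" "F \<subseteq> G0" "\<forall>s\<in>F. in_ring E (c s)" and p: "p = (\<Sum>s\<in>F. c s * s)"
    using assms unfolding line_edge_ideal_def ideal_gen_def G0_def by blast
  have "hc d p = (if 2 \<le> d then (\<Sum>s\<in>F. hc (d - 2) (c s) * s) else 0)" for d
  proof -
    have "hc d p = (\<Sum>s\<in>F. hc d (s * c s))" unfolding p by (simp add: hc_sum mult.commute)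
    also have "\<dots> = (\<Sum>s\<in>F. if 2 \<le> d then s * hc (d - 2) (c s) else 0)"
    proof (rule sum.cong[OF refl])
      fix s assume "s \<in> F"
      then have "homog 2 s" using F(2) G0_homog by blast
      then show "hc d (s * c s) = (if 2 \<le> d then s * hc (d - 2) (c s) else 0)" by (rule hc_mult_homog)
    qed
    also have "\<dots> = (if 2 \<le> d then (\<Sum>s\<in>F. hc (d - 2) (c s) * s) else 0)"
      by (simp add: mult.commute)
    finally show ?thesis .
  qed
  then show ?thesis using F by blast
qed

lemma a1_ge: assumes j: "j < r 1" shows "0 \<le> a 1 j" "homog (nat (a 1 j)) (g j)" "2 \<le> nat (a 1 j)"
proof -
  have P: "if 0 \<le> a 1 j then homog (nat (a 1 j)) (g j) else g j = 0"
    using Mprops1[OF j] by blast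
  show a: "0 \<le> a 1 j" using P g_nonzero[OF j] by (auto split: if_splits)
  show h: "homog (nat (a 1 j)) (g j)" using P a by simp
  show "2 \<le> nat (a 1 j)"
  proof (rule ccontr)
    assume "\<not> 2 \<le> nat (a 1 j)"
    obtain F c where "\<forall>d. hc d (g j) = (if 2 \<le> d then (\<Sum>s\<in>F. hc (d - 2) (c s) * s) else 0)"
      using I_struct[OF g_in_I[OF j]] by blast
    then have "hc (nat (a 1 j)) (g j) = 0" using \<open>\<not> 2 \<le> nat (a 1 j)\<close> by simp
    then have "g j = 0" using h by (simp add: homog_iff_hc)
    then show False using g_nonzero[OF j] by simp
  qed
qed

lemma gen_in_span: assumes s: "s \<in> G0" shows "\<exists>\<beta>. s = (\<Sum>k<r 1. g k * cst (\<beta> k))"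
proof -
  let ?v = "\<lambda>k::nat. if k < 1 then s else 0"
  have "?v \<in> diff_image E r M 1" unfolding img1
    using G0_in_I[OF s] G0_in_ring[OF s] by (auto simp: vec_in_def)
  then obtain w where w: "vec_in E (r 1) w" "diff_apply r M 1 w = ?v"
    unfolding diff_image_def by auto
  have sw: "s = (\<Sum>k<r 1. g k * w k)" using fun_cong[OF w(2), of 0] by (simp add: diff_apply_def r0)
  define \<beta> where "\<beta> k = (if nat (a 1 k) = 2 then Poly_Mapping.lookup (w k) 0 else 0)" for k
  have "s = hc 2 s" using G0_homog[OF s] by (simp add: homog_iff_hc)
  also have "\<dots> = (\<Sum>k<r 1. hc 2 (g k * w k))" by (subst sw) (simp add: hc_sum)
  also have "\<dots> = (\<Sum>k<r 1. g k * cst (\<beta> k))" unfolding \<beta>_def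
  proof (rule sum.cong[OF refl])
    fix k assume "k \<in> {..<r 1}"
    then have k: "k < r 1" by simp
    show "hc 2 (g k * w k) = g k * cst (if nat (a 1 k) = 2 then Poly_Mapping.lookup (w k) 0 else 0)"
      using hc_mult_homog[OF a1_ge(2)[OF k], of 2 "w k"] a1_ge(3)[OF k]
      by (auto simp: hc_0_cst)
  qed
  finally show ?thesis by blast
qed

lemma a1_eq: assumes j: "j < r 1" shows "a 1 j = 2"
proof (rule ccontr)
  assume ne: "a 1 j \<noteq> 2"
  define D where "D = nat (a 1 j)"
  have D3: "3 \<le> D" using a1_ge[OF j] ne unfolding D_def by linarith
  have hD: "homog D (g j)" using a1_ge[OF j] unfolding D_def by simp
  obtain F c where F: "finite F" "F \<subseteq> G0" "\<forall>s\<in>F. in_ring E (c s)"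
    and hcF: "\<forall>d. hc d (g j) = (if 2 \<le> d then (\<Sum>s\<in>F. hc (d - 2) (c s) * s) else 0)"
    using I_struct[OF g_in_I[OF j]] by blast
  obtain B where B: "\<forall>s\<in>G0. s = (\<Sum>k<r 1. g k * cst (B s k))"
    using gen_in_span by metis
  define h where "h k = (\<Sum>s\<in>F. hc (D - 2) (c s) * cst (B s k))" for k
  define u where "u k = (if k < r 1 then ev j k - h k else 0)" for k
  have u_in: "vec_in E (r 1) u"
    unfolding vec_in_def u_def h_def ev_def
    using F(3) by (auto intro!: in_ring_diff in_ring_uminus in_ring_sum in_ring_mult in_ring_hc)
  have "(\<Sum>k<r 1. g k * u k) = (\<Sum>k<r 1. g k * ev j k) - (\<Sum>k<r 1. g k * h k)"
    by (simp add: u_def right_diff_distrib sum_subtractf)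
  also have "(\<Sum>k<r 1. g k * ev j k) = g j" using j by (simp add: ev_def sum_delta_mult)
  also have "(\<Sum>k<r 1. g k * h k) = (\<Sum>s\<in>F. hc (D - 2) (c s) * (\<Sum>k<r 1. g k * cst (B s k)))"
    unfolding h_def by (simp add: sum_distrib_left sum_distrib_right sum.swap[of _ F] algebra_simps)
  also have "\<dots> = (\<Sum>s\<in>F. hc (D - 2) (c s) * s)"
    using B F(2) by (intro sum.cong refl) auto
  also have "\<dots> = hc D (g j)" using hcF D3 by simp
  also have "\<dots> = g j" using hD by (simp add: homog_iff_hc)
  finally have "(\<Sum>k<r 1. g k * u k) = 0" by simp
  then have "diff_apply r M 1 u = (\<lambda>_. 0)" by (simp add: diff_apply_def r0 fun_eq_iff)
  then have "Poly_Mapping.lookup (u j) 0 = 0" using no_const_kernel[OF _ u_in] j by simp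
  moreover have "Poly_Mapping.lookup (h j) 0 = 0"
    unfolding h_def using D3 by (simp add: lookup_sum lookup_mult_0 lookup_hc_0)
  ultimately show False using j by (simp add: u_def ev_def lookup_minus)
qed

lemma g_homog: "j < r 1 \<Longrightarrow> homog 2 (g j)"
  using a1_ge(2) a1_eq by fastforce

lemma g_indep: assumes "(\<Sum>j<r 1. cs (c j) (g j)) = 0" shows "\<forall>j\<in>{..<r 1}. c j = 0"
proof
  fix j assume j: "j \<in> {..<r 1}"
  define v where "v k = (if k < r 1 then cst (c k) else (0::('v set,'k) mpoly))" for k
  have v_in: "vec_in E (r 1) v" unfolding vec_in_def v_def by auto
  have "(\<Sum>k<r 1. g k * v k) = (\<Sum>k<r 1. cs (c k) (g k))"
    by (rule sum.cong) (auto simp: v_def cs_def mult.commute)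
  then have "diff_apply r M 1 v = (\<lambda>_. 0)" using assms by (simp add: diff_apply_def r0 fun_eq_iff)
  then have "Poly_Mapping.lookup (v j) 0 = 0" using no_const_kernel[OF _ v_in] j by simp
  then show "c j = 0" using j by (simp add: v_def cst_def)
qed

lemma g_span: assumes j: "j < r 1" shows "g j \<in> ps.span G0"
proof -
  obtain F c where F: "finite F" "F \<subseteq> G0"
    and hcF: "\<forall>d. hc d (g j) = (if 2 \<le> d then (\<Sum>s\<in>F. hc (d - 2) (c s) * s) else 0)"
    using I_struct[OF g_in_I[OF j]] by blast
  have "g j = hc 2 (g j)" using g_homog[OF j] by (simp add: homog_iff_hc)
  also have "\<dots> = (\<Sum>s\<in>F. cs (Poly_Mapping.lookup (c s) 0) s)" using hcF by (simp add: hc_0_cst cs_def)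
  also have "\<dots> \<in> ps.span G0" using F(2) by (intro ps.span_sum ps.span_scale ps.span_base) auto
  finally show ?thesis .
qed

lemma r1_card: "r 1 = card G0"
proof -
  have fam: "inj_on g {..<r 1}" "ps.independent (g ` {..<r 1})" "card (g ` {..<r 1}) = r 1"
    using ps.indep_family[of "{..<r 1}" g] g_indep by auto
  have sub: "g ` {..<r 1} \<subseteq> ps.span G0" using g_span by auto
  have G0sp: "G0 \<subseteq> ps.span (g ` {..<r 1})"
  proof
    fix s assume s: "s \<in> G0"
    obtain \<beta> where "s = (\<Sum>k<r 1. g k * cst (\<beta> k))" using gen_in_span[OF s] by blast
    also have "\<dots> = (\<Sum>k<r 1. cs (\<beta> k) (g k))" by (simp add: cs_def mult.commute)
    also have "\<dots> \<in> ps.span (g ` {..<r 1})" by (intro ps.span_sum ps.span_scale ps.span_base) auto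
    finally show "s \<in> ps.span (g ` {..<r 1})" .
  qed
  have "card (g ` {..<r 1}) = ps.dim (ps.span G0)"
    by (rule ps.basis_card_eq_dim[OF sub _ fam(2)]) (rule ps.span_minimal[OF G0sp ps.subspace_span])
  moreover have "card G0 = ps.dim (ps.span G0)"
    by (rule ps.basis_card_eq_dim[OF ps.span_superset subset_refl monomials_independent[OF finite_G0 G0_monomials]])
  ultimately show ?thesis using fam(3) by simp
qed

end


context mres begin

definition col :: "nat \<Rightarrow> nat \<Rightarrow> ('v set, 'k) mpoly" where
  "col j = (\<lambda>k. if k < r 1 then M 2 k j else 0)"
definition W :: "(nat \<Rightarrow> ('v set, 'k) mpoly) set" where
  "W = {v. vec_in E (r 1) v \<and> (\<forall>k. homog 1 (v k))}"
definition phi :: "(nat \<Rightarrow> ('v set, 'k) mpoly) \<Rightarrow> ('v set, 'k) mpoly" where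
  "phi v = (\<Sum>k<r 1. g k * v k)"
definition K3 :: "(nat \<Rightarrow> ('v set, 'k) mpoly) set" where
  "K3 = {v\<in>W. phi v = 0}"
definition J3 :: "nat set" where
  "J3 = {j. j < r 2 \<and> a 2 j = 3}"

lemma finite_J3: "finite J3" and J3_sub: "J3 \<subseteq> {..<r 2}"
  unfolding J3_def by auto

lemma diff1: "diff_apply r M 1 v = (\<lambda>k. if k < 1 then phi v else 0)"
  by (auto simp: fun_eq_iff diff_apply_def phi_def r0)

lemmas diff1S = diff1[unfolded One_nat_def]

lemma exact1: "diff_kernel E r M 1 = diff_image E r M 2"
  using exact[of 1] unfolding one_add_one by simp

lemma M2_homog:
  assumes k: "k < r 1" and l: "l < r 2"
  shows "hc 1 (M 2 k l * w) = (if a 2 l = 3 then cst (Poly_Mapping.lookup w 0) * M 2 k l else 0)"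
proof -
  have P: "if a 1 k \<le> a 2 l then homog (nat (a 2 l - a 1 k)) (M 2 k l) else M 2 k l = 0"
    and c0: "Poly_Mapping.lookup (M 2 k l) 0 = 0"
    using Mprops2[OF k l] by blast+
  have a1: "a 1 k = 2" using a1_eq[OF k] .
  show ?thesis
  proof (cases "2 \<le> a 2 l")
    case False
    then have "M 2 k l = 0" using P a1 by simp
    then show ?thesis by simp
  next
    case True
    then have h: "homog (nat (a 2 l - 2)) (M 2 k l)" using P a1 by simp
    show ?thesis
    proof (cases "a 2 l = 2")
      case True
      then have "M 2 k l = 0" using h c0 homog0_const0 by simp
      then show ?thesis by simp
    next
      case False
      show ?thesis
      proof (cases "a 2 l = 3")
        case True
        then have "homog 1 (M 2 k l)" using h by simp
        from hc_mult_homog[OF this, of 1 w] have "hc 1 (M 2 k l * w) = M 2 k l * hc 0 w" by simp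
        then show ?thesis using True by (simp add: hc_0_cst mult.commute)
      next
        case F3: False
        then have "2 \<le> nat (a 2 l - 2)" using \<open>2 \<le> a 2 l\<close> \<open>a 2 l \<noteq> 2\<close> by linarith
        then show ?thesis using F3 hc_mult_homog[OF h, of 1 w] by simp
      qed
    qed
  qed
qed

lemma col_K3: assumes j: "j \<in> J3" shows "col j \<in> K3"
proof -
  have jr: "j < r 2" and a2: "a 2 j = 3" using j by (auto simp: J3_def)
  have "col j = diff_apply r M 2 (ev j)" using diff_apply_ev[OF jr] by (simp add: col_def)
  then have "col j \<in> diff_kernel E r M 1" using ev_in_image[OF jr] exact1 by simp
  then have vin: "vec_in E (r 1) (col j)" and d: "diff_apply r M 1 (col j) = (\<lambda>_. 0)"
    by (auto simp: diff_kernel_def)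
  have "phi (col j) = 0" using fun_cong[OF d, of 0] by (simp add: diff1 diff1S)
  moreover have "homog 1 (col j k)" for k
  proof (cases "k < r 1")
    case True
    have "if a 1 k \<le> a 2 j then homog (nat (a 2 j - a 1 k)) (M 2 k j) else M 2 k j = 0"
      using Mprops2[OF True jr] by blast
    then show ?thesis using True a1_eq[OF True] a2 by (simp add: col_def)
  qed (simp add: col_def)
  ultimately show ?thesis using vin by (simp add: K3_def W_def)
qed

lemma col_indep: assumes s: "(\<Sum>j\<in>J3. vcs (c j) (col j)) = 0" shows "\<forall>j\<in>J3. c j = 0"
proof
  fix j assume j: "j \<in> J3"
  define v where "v l = (if l \<in> J3 then cst (c l) else (0::('v set, 'k) mpoly))" for l
  have vin: "vec_in E (r 2) v" using J3_sub unfolding vec_in_def v_def by auto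
  have "diff_apply r M 2 v = (\<lambda>_. 0)"
  proof
    fix k
    show "diff_apply r M 2 v k = 0"
    proof (cases "k < r 1")
      case True
      have "(\<Sum>l<r 2. M 2 k l * v l) = (\<Sum>l\<in>J3. cst (c l) * M 2 k l)"
        using J3_sub by (intro sum.mono_neutral_cong_right) (auto simp: v_def)
      also have "\<dots> = (\<Sum>l\<in>J3. vcs (c l) (col l)) k"
        using True by (simp add: sum_fun_apply vcs_def col_def)
      also have "\<dots> = 0" using s by simp
      finally show ?thesis using True by (simp add: diff_apply_def)
    qed (simp add: diff_apply_def)
  qed
  then have "Poly_Mapping.lookup (v j) 0 = 0" using no_const_kernel[OF _ vin] j J3_sub by auto
  then show "c j = 0" using j by (simp add: v_def cst_def)
qed

lemma K3_span: "K3 \<subseteq> vps.span (col ` J3)"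
proof
  fix v assume "v \<in> K3"
  then have vW: "v \<in> W" and p0: "phi v = 0" by (auto simp: K3_def)
  have vin: "vec_in E (r 1) v" and vh: "\<And>k. homog 1 (v k)" using vW by (auto simp: W_def)
  have "v \<in> diff_kernel E r M 1" using vin p0 by (simp add: diff_kernel_def diff1 diff1S fun_eq_iff)
  then obtain w where w: "vec_in E (r 2) w" "v = diff_apply r M 2 w"
    using exact1 unfolding diff_image_def by auto
  have "v = (\<Sum>j\<in>J3. vcs (Poly_Mapping.lookup (w j) 0) (col j))"
  proof
    fix k
    show "v k = (\<Sum>j\<in>J3. vcs (Poly_Mapping.lookup (w j) 0) (col j)) k"
    proof (cases "k < r 1")
      case True
      have "v k = hc 1 (v k)" using vh by (simp add: homog_iff_hc)
      also have "v k = (\<Sum>l<r 2. M 2 k l * w l)" using w(2) True by (simp add: diff_apply_def)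
      then have "hc 1 (v k) = (\<Sum>l<r 2. hc 1 (M 2 k l * w l))" by (simp add: hc_sum)
      also have "\<dots> = (\<Sum>l<r 2. if a 2 l = 3 then cst (Poly_Mapping.lookup (w l) 0) * M 2 k l else 0)"
        by (intro sum.cong refl) (rule M2_homog[OF True], simp)
      also have "\<dots> = (\<Sum>l\<in>J3. cst (Poly_Mapping.lookup (w l) 0) * M 2 k l)"
        using J3_sub by (intro sum.mono_neutral_cong_right) (auto simp: J3_def)
      also have "\<dots> = (\<Sum>j\<in>J3. vcs (Poly_Mapping.lookup (w j) 0) (col j)) k"
        using True by (simp add: sum_fun_apply vcs_def col_def)
      finally show ?thesis .
    next
      case False
      then show ?thesis using vin by (simp add: vec_in_def sum_fun_apply vcs_def col_def)
    qed
  qed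
  also have "\<dots> \<in> vps.span (col ` J3)" by (intro vps.span_sum vps.span_scale vps.span_base) auto
  finally show "v \<in> vps.span (col ` J3)" .
qed

lemma dimK3: "vps.dim K3 = card J3"
proof -
  have fam: "inj_on col J3" "vps.independent (col ` J3)" "card (col ` J3) = card J3"
    using vps.indep_family[OF finite_J3, of col] col_indep by auto
  have "card (col ` J3) = vps.dim K3"
    by (rule vps.basis_card_eq_dim[OF _ K3_span fam(2)]) (use col_K3 in blast)
  then show ?thesis using fam(3) by simp
qed


definition dl :: "nat \<times> 'v set \<Rightarrow> nat \<Rightarrow> ('v set, 'k) mpoly" where
  "dl jx = (\<lambda>k. if k = fst jx then var (snd jx) else 0)"
definition Mon3 :: "('v set, 'k) mpoly set" where
  "Mon3 = {var x * s | x s. x \<in> E \<and> s \<in> G0}"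

lemma W_subspace: "vps.subspace W"
  unfolding vps.subspace_def W_def vec_in_def vcs_def
  by (auto intro!: in_ring_add in_ring_mult homog_add homog_cst_mult)

lemma homog_var_S[simp]: "homog (Suc 0) (var x)"
  using homog_var[of x] by (simp only: One_nat_def)

lemma dl_W: assumes "jx \<in> {..<r 1} \<times> E" shows "dl jx \<in> W"
  using assms unfolding W_def vec_in_def dl_def
  by (auto intro: in_ring_var homog_var)

lemma lookup_var_single: "Poly_Mapping.lookup (var y :: ('v set, 'k) mpoly) (Poly_Mapping.single x 1) = (if y = x then 1 else 0)"
  by (simp add: var_def lookup_single when_def single_key_eq)

lemma lookup_var_single_S: "Poly_Mapping.lookup (var y :: ('v set, 'k) mpoly) (Poly_Mapping.single x (Suc 0)) = (if y = x then 1 else 0)"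
  using lookup_var_single[of y x] by (simp only: One_nat_def)

lemma dl_indep:
  assumes s: "(\<Sum>jx\<in>{..<r 1} \<times> E. vcs (c jx) (dl jx)) = 0"
  shows "\<forall>jx\<in>{..<r 1} \<times> E. c jx = 0"
proof
  fix jx assume jx: "jx \<in> {..<r 1} \<times> E"
  obtain j x where jxe: "jx = (j, x)" by (cases jx)
  have fin: "finite ({..<r 1} \<times> E)" using finE by simp
  have "Poly_Mapping.lookup ((\<Sum>jx\<in>{..<r 1} \<times> E. vcs (c jx) (dl jx)) j) (Poly_Mapping.single x 1)
     = (\<Sum>jx'\<in>{..<r 1} \<times> E. c jx' * Poly_Mapping.lookup (dl jx' j) (Poly_Mapping.single x 1))"
    by (simp add: sum_fun_apply lookup_sum vcs_def lookup_cst_mult)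
  also have "\<dots> = (\<Sum>jx'\<in>{..<r 1} \<times> E. c jx' * (if jx' = jx then 1 else 0))"
  proof (intro sum.cong refl)
    fix jx' assume "jx' \<in> {..<r 1} \<times> E"
    obtain j' x' where "jx' = (j', x')" by (cases jx')
    then show "c jx' * Poly_Mapping.lookup (dl jx' j) (Poly_Mapping.single x 1) = c jx' * (if jx' = jx then 1 else 0)"
      by (auto simp: dl_def lookup_var_single lookup_var_single_S jxe)
  qed
  also have "\<dots> = c jx" by (rule sum_delta_mult[OF fin jx])
  finally show "c jx = 0" using s by simp
qed

lemma W_span: "W \<subseteq> vps.span (dl ` ({..<r 1} \<times> E))"
proof
  fix v assume "v \<in> W"
  then have vin: "vec_in E (r 1) v" and vh: "\<And>k. homog 1 (v k)" by (auto simp: W_def)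
  let ?c = "\<lambda>jx. Poly_Mapping.lookup (v (fst jx)) (Poly_Mapping.single (snd jx) 1)"
  have "v = (\<Sum>jx\<in>{..<r 1} \<times> E. vcs (?c jx) (dl jx))"
  proof
    fix k
    have "(\<Sum>jx\<in>{..<r 1} \<times> E. vcs (?c jx) (dl jx)) k
        = (\<Sum>jx\<in>{..<r 1} \<times> E. cst (?c jx) * (if k = fst jx then var (snd jx) else 0))"
      by (simp add: sum_fun_apply vcs_def dl_def)
    also have "\<dots> = (\<Sum>j<r 1. \<Sum>x\<in>E. cst (Poly_Mapping.lookup (v j) (Poly_Mapping.single x 1)) * (if k = j then var x else 0))"
      by (simp add: sum.cartesian_product split_def)
    also have "\<dots> = (\<Sum>j<r 1. if k = j then (\<Sum>x\<in>E. cst (Poly_Mapping.lookup (v k) (Poly_Mapping.single x 1)) * var x) else 0)"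
      by (intro sum.cong refl) auto
    also have "\<dots> = (if k < r 1 then (\<Sum>x\<in>E. cst (Poly_Mapping.lookup (v k) (Poly_Mapping.single x 1)) * var x) else 0)"
      by (simp add: sum.delta')
    also have "\<dots> = v k"
    proof (cases "k < r 1")
      case True
      then have ir: "in_ring E (v k)" using vin by (simp add: vec_in_def)
      show ?thesis using True lin_form[OF vh ir finE] by simp
    next
      case False
      then show ?thesis using vin by (simp add: vec_in_def)
    qed
    finally show "v k = (\<Sum>jx\<in>{..<r 1} \<times> E. vcs (?c jx) (dl jx)) k" by simp
  qed
  also have "\<dots> \<in> vps.span (dl ` ({..<r 1} \<times> E))"
    by (intro vps.span_sum vps.span_scale vps.span_base) auto
  finally show "v \<in> vps.span (dl ` ({..<r 1} \<times> E))" .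
qed

lemma dimW: "vps.dim W = r 1 * card E"
proof -
  have fin: "finite ({..<r 1} \<times> E)" using finE by simp
  have fam: "inj_on dl ({..<r 1} \<times> E)" "vps.independent (dl ` ({..<r 1} \<times> E))"
      "card (dl ` ({..<r 1} \<times> E)) = card ({..<r 1} \<times> E)"
    using vps.indep_family[OF fin, of dl] dl_indep by auto
  have "card (dl ` ({..<r 1} \<times> E)) = vps.dim W"
    by (rule vps.basis_card_eq_dim[OF _ W_span fam(2)]) (use dl_W in blast)
  then show ?thesis using fam(3) by (simp add: card_cartesian_product)
qed

lemma phi_add: "phi (x + y) = phi x + phi y"
  by (simp add: phi_def distrib_left sum.distrib)

lemma phi_scale: "phi (vcs c x) = cs c (phi x)"
  by (simp add: phi_def vcs_def cs_def sum_distrib_left algebra_simps)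

lemma finite_Mon3: "finite Mon3"
proof -
  have "Mon3 \<subseteq> (\<lambda>(x, s). var x * s) ` (E \<times> G0)" unfolding Mon3_def by auto
  then show ?thesis using finE finite_G0 finite_subset by blast
qed

lemma Mon3_monomials: "Mon3 \<subseteq> range (\<lambda>m. Poly_Mapping.single m 1)"
proof
  fix p assume "p \<in> Mon3"
  then obtain x s where p: "p = var x * s" "s \<in> G0" unfolding Mon3_def by blast
  then obtain m where "s = Poly_Mapping.single m 1" using G0_monomials by blast
  then have "p = Poly_Mapping.single (Poly_Mapping.single x 1 + m) 1"
    using p by (simp add: var_def mult_single)
  then show "p \<in> range (\<lambda>m. Poly_Mapping.single m 1)" by blast
qed

lemma phiW_span: "phi ` W \<subseteq> ps.span Mon3"
proof
  fix p assume "p \<in> phi ` W"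
  then obtain v where v: "v \<in> W" "p = phi v" by blast
  then have vin: "vec_in E (r 1) v" and vh: "\<And>k. homog 1 (v k)" by (auto simp: W_def)
  have sub: "{a * b | a b. a \<in> G0 \<and> b \<in> var ` E} \<subseteq> Mon3"
    unfolding Mon3_def by (auto simp: mult.commute)
  have "g k * v k \<in> ps.span Mon3" if k: "k < r 1" for k
  proof -
    have "in_ring E (v k)" using vin k by (simp add: vec_in_def)
    then have "v k = (\<Sum>x\<in>E. cs (Poly_Mapping.lookup (v k) (Poly_Mapping.single x 1)) (var x))"
      using lin_form[OF vh _ finE] by (simp add: cs_def)
    also have "\<dots> \<in> ps.span (var ` E)" by (intro ps.span_sum ps.span_scale ps.span_base) auto
    finally have "g k * v k \<in> ps.span {a * b | a b. a \<in> G0 \<and> b \<in> var ` E}"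
      by (rule span_mult[OF g_span[OF k]])
    then show ?thesis using ps.span_mono[OF sub] by blast
  qed
  then have "phi v \<in> ps.span Mon3" unfolding phi_def by (intro ps.span_sum) auto
  then show "p \<in> ps.span Mon3" using v by simp
qed

lemma Mon3_sub: "Mon3 \<subseteq> phi ` W"
proof
  fix p assume "p \<in> Mon3"
  then obtain x s where p: "p = var x * s" and x: "x \<in> E" and s: "s \<in> G0" unfolding Mon3_def by blast
  obtain \<beta> where \<beta>: "s = (\<Sum>k<r 1. g k * cst (\<beta> k))" using gen_in_span[OF s] by blast
  define v where "v k = (if k < r 1 then cst (\<beta> k) * var x else 0)" for k
  have "v \<in> W" unfolding W_def vec_in_def v_def
    using x by (auto intro!: in_ring_mult in_ring_var homog_cst_mult homog_var)
  moreover have "phi v = p"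
  proof -
    have "phi v = (\<Sum>k<r 1. g k * cst (\<beta> k)) * var x"
      unfolding phi_def v_def by (simp add: sum_distrib_right mult.assoc)
    then show ?thesis using \<beta> p by (simp add: mult.commute)
  qed
  ultimately show "p \<in> phi ` W" by blast
qed

lemma dim_phiW: "ps.dim (phi ` W) = card Mon3"
  using ps.basis_card_eq_dim[OF Mon3_sub phiW_span monomials_independent[OF finite_Mon3 Mon3_monomials]]
  by simp

lemma main_count: "card J3 + card Mon3 = card G0 * card E"
proof -
  have fin: "finite (dl ` ({..<r 1} \<times> E))" using finE by simp
  have "vps.dim W = vps.dim {x\<in>W. phi x = 0} + ps.dim (phi ` W)"
    by (rule pair.rank_nullity[OF phi_add phi_scale W_subspace fin W_span])
  then show ?thesis using dimW dimK3 dim_phiW r1_card by (simp add: K3_def)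
qed

end


lemma card_fibers:
  assumes "finite A" "\<And>b. b \<in> f ` A \<Longrightarrow> card {a\<in>A. f a = b} = k"
  shows "card A = k * card (f ` A)"
proof -
  have "card A = (\<Sum>a\<in>A. 1)" by simp
  also have "\<dots> = (\<Sum>b\<in>f ` A. \<Sum>a\<in>{a\<in>A. f a = b}. 1)"
    by (rule sum.image_gen[OF assms(1)])
  also have "\<dots> = (\<Sum>b\<in>f ` A. k)" using assms(2) by (intro sum.cong refl) simp
  also have "\<dots> = k * card (f ` A)" by simp
  finally show ?thesis .
qed

lemma card_pairs_distinct:
  assumes "finite A"
  shows "card {(x, y). x \<in> A \<and> y \<in> A \<and> x \<noteq> y} = card A * (card A - 1)"
proof -
  have "{(x, y). x \<in> A \<and> y \<in> A \<and> x \<noteq> y} = Sigma A (\<lambda>x. A - {x})" by auto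
  then have "card {(x, y). x \<in> A \<and> y \<in> A \<and> x \<noteq> y} = (\<Sum>x\<in>A. card (A - {x}))"
    using assms by (simp add: card_SigmaI)
  also have "\<dots> = (\<Sum>x\<in>A. card A - 1)" using assms by (intro sum.cong refl) simp
  finally show ?thesis by (simp add: mult.commute)
qed

lemma card_triples_distinct:
  assumes "finite A"
  shows "card {(x, y, z). x \<in> A \<and> y \<in> A \<and> z \<in> A \<and> x \<noteq> y \<and> y \<noteq> z \<and> x \<noteq> z}
       = card A * (card A - 1) * (card A - 2)"
proof -
  have "{(x, y, z). x \<in> A \<and> y \<in> A \<and> z \<in> A \<and> x \<noteq> y \<and> y \<noteq> z \<and> x \<noteq> z}
      = Sigma A (\<lambda>x. {(y, z). y \<in> A - {x} \<and> z \<in> A - {x} \<and> y \<noteq> z})" by force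
  moreover have "\<And>x. finite {(y, z). y \<in> A - {x} \<and> z \<in> A - {x} \<and> y \<noteq> z}"
    by (rule finite_subset[of _ "A \<times> A"]) (auto simp: assms)
  ultimately have "card {(x, y, z). x \<in> A \<and> y \<in> A \<and> z \<in> A \<and> x \<noteq> y \<and> y \<noteq> z \<and> x \<noteq> z}
      = (\<Sum>x\<in>A. card {(y, z). y \<in> A - {x} \<and> z \<in> A - {x} \<and> y \<noteq> z})"
    using assms by (simp add: card_SigmaI)
  also have "\<dots> = (\<Sum>x\<in>A. (card A - 1) * (card A - 2))"
  proof (intro sum.cong refl)
    fix x assume "x \<in> A"
    have "card {(y, z). y \<in> A - {x} \<and> z \<in> A - {x} \<and> y \<noteq> z} = card (A - {x}) * (card (A - {x}) - 1)"
      using card_pairs_distinct[of "A - {x}"] assms by simp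
    also have "\<dots> = (card A - 1) * (card A - 2)" using \<open>x \<in> A\<close> assms by (simp add: numeral_2_eq_2)
    finally show "card {(y, z). y \<in> A - {x} \<and> z \<in> A - {x} \<and> y \<noteq> z} = (card A - 1) * (card A - 2)" .
  qed
  finally show ?thesis by (simp add: mult.assoc)
qed

lemma choose2: "2 * (n choose 2) = n * (n - 1)"
proof (induction n)
  case 0 then show ?case by simp
next
  case (Suc n)
  have "2 * (Suc n choose 2) = 2 * n + 2 * (n choose 2)" by (simp add: numeral_2_eq_2)
  also have "\<dots> = Suc n * (Suc n - 1)" using Suc by (cases n) auto
  finally show ?case .
qed

lemma cubic_aux: "3 * (n * (n - 1)) + n * (n - 1) * (n - 2) = Suc n * n * (n - 1)"
proof (cases "n < 2")
  case True
  then have "n = 0 \<or> n = 1" by auto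
  then show ?thesis by auto
next
  case False
  then obtain k where k: "n = k + 2" by (metis add.commute le_Suc_ex not_less)
  have "3 * ((k + 2) * (k + 1)) + (k + 2) * (k + 1) * k = Suc (k + 2) * (k + 2) * (k + 1)"
    by (simp add: algebra_simps)
  then show ?thesis using k by simp
qed

lemma choose3: "6 * (n choose 3) = n * (n - 1) * (n - 2)"
proof (induction n)
  case 0 then show ?case by simp
next
  case (Suc n)
  have "6 * (Suc n choose 3) = 6 * (n choose 2) + 6 * (n choose 3)"
    by (simp add: numeral_3_eq_3 numeral_2_eq_2)
  also have "\<dots> = 3 * (n * (n - 1)) + n * (n - 1) * (n - 2)" using Suc.IH choose2[of n] by simp
  also have "\<dots> = Suc n * n * (n - 1)" by (rule cubic_aux)
  also have "\<dots> = Suc n * (Suc n - 1) * (Suc n - 2)" by simp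
  finally show ?case .
qed

definition sx :: "'v \<Rightarrow> 'v \<Rightarrow>\<^sub>0 nat" where "sx x = Poly_Mapping.single x 1"

lemma lookup_sx: "Poly_Mapping.lookup (sx x) y = (if x = y then 1 else 0)"
  by (simp add: sx_def lookup_single when_def)

lemma pair_eq:
  assumes "a \<noteq> b" "c \<noteq> d"
  shows "sx a + sx b = sx c + sx d \<longleftrightarrow> (a = c \<and> b = d) \<or> (a = d \<and> b = c)"
proof
  assume e: "sx a + sx b = sx c + sx d"
  have la: "Poly_Mapping.lookup (sx a + sx b) a = Poly_Mapping.lookup (sx c + sx d) a"
   and lb: "Poly_Mapping.lookup (sx a + sx b) b = Poly_Mapping.lookup (sx c + sx d) b"
    using e by simp_all
  have 1: "(if c = a then 1 else 0) + (if d = a then 1 else 0) = (1::nat)"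
    using la assms by (simp add: lookup_add lookup_sx)
  have 2: "(if c = b then 1 else 0) + (if d = b then 1 else 0) = (1::nat)"
    using lb assms by (simp add: lookup_add lookup_sx)
  show "(a = c \<and> b = d) \<or> (a = d \<and> b = c)"
    using 1 2 assms by (cases "c = a"; cases "d = a"; cases "c = b"; cases "d = b") simp_all
next
  assume "(a = c \<and> b = d) \<or> (a = d \<and> b = c)"
  then show "sx a + sx b = sx c + sx d" by (metis add.commute)
qed

lemma lookup_tri:
  assumes "a \<noteq> b" "b \<noteq> c" "a \<noteq> c"
  shows "Poly_Mapping.lookup (sx a + sx b + sx c) y = (if y \<in> {a, b, c} then 1 else 0)"
  using assms by (simp add: lookup_add lookup_sx)

lemma tri_eq:
  assumes "a \<noteq> b" "b \<noteq> c" "a \<noteq> c" "a' \<noteq> b'" "b' \<noteq> c'" "a' \<noteq> c'"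
  shows "sx a + sx b + sx c = sx a' + sx b' + sx c' \<longleftrightarrow> {a, b, c} = {a', b', c'}"
proof
  assume "sx a + sx b + sx c = sx a' + sx b' + sx c'"
  then have "\<forall>y. Poly_Mapping.lookup (sx a + sx b + sx c) y = Poly_Mapping.lookup (sx a' + sx b' + sx c') y"
    by simp
  have "(y \<in> {a, b, c}) = (y \<in> {a', b', c'})" for y
  proof -
    have "Poly_Mapping.lookup (sx a + sx b + sx c) y = Poly_Mapping.lookup (sx a' + sx b' + sx c') y"
      using \<open>\<forall>y. _\<close> by blast
    then show ?thesis unfolding lookup_tri[OF assms(1-3)] lookup_tri[OF assms(4-6)]
      by (simp split: if_splits)
  qed
  then show "{a, b, c} = {a', b', c'}" by blast
next
  assume "{a, b, c} = {a', b', c'}"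
  then show "sx a + sx b + sx c = sx a' + sx b' + sx c'"
    by (intro poly_mapping_eqI) (simp add: lookup_tri[OF assms(1-3)] lookup_tri[OF assms(4-6)])
qed

locale comb =
  fixes V :: "'v set" and E :: "'v set set"
  assumes finV: "finite V"
    and edges: "\<And>e. e \<in> E \<Longrightarrow> \<exists>x y. x \<in> V \<and> y \<in> V \<and> x \<noteq> y \<and> e = {x, y}"
    and notri: "\<And>a b c. {a, b} \<in> E \<Longrightarrow> {b, c} \<in> E \<Longrightarrow> {c, a} \<in> E \<Longrightarrow> a \<noteq> b \<Longrightarrow> b \<noteq> c \<Longrightarrow> a \<noteq> c \<Longrightarrow> False"
begin

lemma E_sub: "E \<subseteq> Pow V" using edges by blast

lemma finE: "finite E" using E_sub finV by (meson finite_Pow_iff finite_subset)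

lemma edge_eq: "e \<in> E \<Longrightarrow> u \<in> e \<Longrightarrow> v \<in> e \<Longrightarrow> u \<noteq> v \<Longrightarrow> e = {u, v}"
  using edges by blast

definition adj :: "'v set \<Rightarrow> 'v set \<Rightarrow> bool" where
  "adj f g \<longleftrightarrow> f \<in> E \<and> g \<in> E \<and> f \<noteq> g \<and> f \<inter> g \<noteq> {}"

lemma adj_sym: "adj f g \<longleftrightarrow> adj g f" unfolding adj_def by blast

lemma common_vertex:
  assumes fg: "adj f g" and gh: "adj g h" and fh: "adj f h"
  shows "\<exists>u. u \<in> f \<and> u \<in> g \<and> u \<in> h"
proof (rule ccontr)
  assume no: "\<not> ?thesis"
  obtain u where u: "u \<in> f" "u \<in> g" using fg unfolding adj_def by blast
  obtain v where v: "v \<in> g" "v \<in> h" using gh unfolding adj_def by blast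
  obtain w where w: "w \<in> f" "w \<in> h" using fh unfolding adj_def by blast
  have uh: "u \<notin> h" using no u by blast
  have uv: "u \<noteq> v" using uh v by blast
  have uw: "u \<noteq> w" using uh w by blast
  have E3: "f \<in> E" "g \<in> E" "h \<in> E" using fg gh unfolding adj_def by auto
  have f: "f = {u, w}" using edge_eq[OF E3(1) u(1) w(1) uw] .
  have g: "g = {u, v}" using edge_eq[OF E3(2) u(2) v(1) uv] .
  have vw: "v \<noteq> w" using f g fg unfolding adj_def by auto
  have h: "h = {v, w}" using edge_eq[OF E3(3) v(2) w(2) vw] .
  have "{w, u} \<in> E" using E3(1) f by (simp add: insert_commute)
  moreover have "{u, v} \<in> E" "{v, w} \<in> E" using E3(2,3) g h by simp_all
  ultimately show False using notri[of u v w] uv vw uw by blast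
qed

lemma unique_common:
  assumes "f \<in> E" "g \<in> E" "f \<noteq> g" "u \<in> f" "u \<in> g" "u' \<in> f" "u' \<in> g"
  shows "u = u'"
proof (rule ccontr)
  assume "u \<noteq> u'"
  then have "f = {u, u'}" "g = {u, u'}" using edge_eq assms by blast+
  then show False using assms(3) by simp
qed

definition N :: "'v set \<Rightarrow> 'v set set" where "N e = {f. adj e f}"

lemma N_card:
  assumes e: "e \<in> E"
  shows "card (N e) = (\<Sum>u\<in>e. vdeg E u) - 2"
proof -
  obtain x y where xy: "x \<noteq> y" "e = {x, y}" using edges[OF e] by blast
  let ?X = "{f\<in>E. x \<in> f}" and ?Y = "{f\<in>E. y \<in> f}"
  have fin: "finite ?X" "finite ?Y" using finE by auto
  have int: "?X \<inter> ?Y = {e}"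
  proof
    show "?X \<inter> ?Y \<subseteq> {e}" using edge_eq xy e by blast
    show "{e} \<subseteq> ?X \<inter> ?Y" using e xy by auto
  qed
  have Ne: "N e = (?X \<union> ?Y) - {e}"
    unfolding N_def adj_def using e xy by auto
  have "card (?X \<union> ?Y) + card (?X \<inter> ?Y) = card ?X + card ?Y" using card_Un_Int[OF fin] by simp
  then have "card (?X \<union> ?Y) = card ?X + card ?Y - 1" using int by simp
  moreover have "e \<in> ?X \<union> ?Y" using e xy by auto
  ultimately have "card (N e) = card ?X + card ?Y - 2"
    unfolding Ne using fin by (simp add: card_Diff_singleton)
  moreover have "(\<Sum>u\<in>e. vdeg E u) = card ?X + card ?Y"
    using xy by (simp add: vdeg_def)
  ultimately show ?thesis by simp
qed

definition AP :: "('v set \<times> 'v set) set" where "AP = {(f, g). adj f g}"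

definition D3 :: "('v set \<times> 'v set \<times> 'v set) set" where
  "D3 = {(f, g, h). f \<in> E \<and> g \<in> E \<and> h \<in> E \<and> f \<noteq> g \<and> g \<noteq> h \<and> f \<noteq> h}"

lemma finite_AP: "finite AP"
  by (rule finite_subset[of _ "E \<times> E"]) (auto simp: AP_def adj_def finE)

lemma finite_D3: "finite D3"
  by (rule finite_subset[of _ "E \<times> E \<times> E"]) (auto simp: D3_def finE)

end


lemma sum_of_bool_card: "finite A \<Longrightarrow> (\<Sum>t\<in>A. of_bool (P t) :: int) = int (card {t\<in>A. P t})"
proof -
  assume fin: "finite A"
  have "(\<Sum>t\<in>{t\<in>A. P t}. 1::int) = (\<Sum>t\<in>A. if P t then 1 else 0)"
    by (rule sum.inter_filter[OF fin])
  moreover have "(\<Sum>t\<in>A. if P t then 1 else 0) = (\<Sum>t\<in>A. of_bool (P t) :: int)"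
    by (rule sum.cong) auto
  ultimately show ?thesis by simp
qed

lemma perm3:
  assumes "a \<noteq> b" "b \<noteq> c" "a \<noteq> c" "{a, b, c} = {f, g, h}"
  shows "(a, b, c) \<in> {(f, g, h), (f, h, g), (g, f, h), (g, h, f), (h, f, g), (h, g, f)}"
proof -
  have "a \<in> {f, g, h}" "b \<in> {f, g, h}" "c \<in> {f, g, h}" using assms(4) by blast+
  then show ?thesis using assms(1-3) by auto
qed

context comb begin

definition rot :: "'v set \<times> 'v set \<times> 'v set \<Rightarrow> 'v set \<times> 'v set \<times> 'v set" where
  "rot t = (case t of (f, g, h) \<Rightarrow> (g, h, f))"
definition sw23 :: "'v set \<times> 'v set \<times> 'v set \<Rightarrow> 'v set \<times> 'v set \<times> 'v set" where
  "sw23 t = (case t of (f, g, h) \<Rightarrow> (f, h, g))"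
definition sw12 :: "'v set \<times> 'v set \<times> 'v set \<Rightarrow> 'v set \<times> 'v set \<times> 'v set" where
  "sw12 t = (case t of (f, g, h) \<Rightarrow> (g, f, h))"

lemma bij_rot: "bij_betw rot D3 D3"
  by (rule bij_betw_byWitness[where f' = "\<lambda>(f, g, h). (h, f, g)"]) (auto simp: rot_def D3_def)
lemma bij_sw23: "bij_betw sw23 D3 D3"
  by (rule bij_betw_byWitness[where f' = sw23]) (auto simp: sw23_def D3_def)
lemma bij_sw12: "bij_betw sw12 D3 D3"
  by (rule bij_betw_byWitness[where f' = sw12]) (auto simp: sw12_def D3_def)

lemma sum_reindex_D3:
  assumes "bij_betw \<sigma> D3 D3"
  shows "(\<Sum>t\<in>D3. F (\<sigma> t)) = (\<Sum>t\<in>D3. (F t :: int))"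
  using sum.reindex_bij_betw[OF assms, of F] by simp

definition A12 :: "'v set \<times> 'v set \<times> 'v set \<Rightarrow> bool" where "A12 t = (case t of (f, g, h) \<Rightarrow> adj f g)"
definition A23 :: "'v set \<times> 'v set \<times> 'v set \<Rightarrow> bool" where "A23 t = (case t of (f, g, h) \<Rightarrow> adj g h)"
definition A13 :: "'v set \<times> 'v set \<times> 'v set \<Rightarrow> bool" where "A13 t = (case t of (f, g, h) \<Rightarrow> adj f h)"

definition G0e :: "('v set \<Rightarrow>\<^sub>0 nat) set" where "G0e = (\<lambda>(f, g). sx f + sx g) ` AP"
definition M3e :: "('v set \<Rightarrow>\<^sub>0 nat) set" where
  "M3e = {sx x + (sx f + sx g) | x f g. x \<in> E \<and> adj f g}"
definition nu :: "'v set \<times> 'v set \<Rightarrow> ('v set \<Rightarrow>\<^sub>0 nat)" where "nu p = (case p of (f, g) \<Rightarrow> sx f + sx f + sx g)"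
definition mono :: "'v set \<times> 'v set \<times> 'v set \<Rightarrow> ('v set \<Rightarrow>\<^sub>0 nat)" where
  "mono t = (case t of (f, g, h) \<Rightarrow> sx f + sx g + sx h)"
definition D3i :: "('v set \<times> 'v set \<times> 'v set) set" where "D3i = {t\<in>D3. A12 t \<or> A23 t \<or> A13 t}"

lemma adj_ne: "adj f g \<Longrightarrow> f \<noteq> g" unfolding adj_def by blast
lemma adj_E: "adj f g \<Longrightarrow> f \<in> E \<and> g \<in> E" unfolding adj_def by blast

lemma card_AP: "card AP = 2 * card G0e"
  unfolding G0e_def
proof (rule card_fibers[OF finite_AP])
  fix b assume "b \<in> (\<lambda>(f, g). sx f + sx g) ` AP"
  then obtain f g where fg: "adj f g" and b: "b = sx f + sx g" by (auto simp: AP_def)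
  have ne: "f \<noteq> g" using adj_ne[OF fg] .
  have "{p\<in>AP. (\<lambda>(f, g). sx f + sx g) p = b} = {(f, g), (g, f)}"
  proof (rule set_eqI)
    fix p :: "'v set \<times> 'v set"
    obtain f' g' where p: "p = (f', g')" by (cases p)
    show "p \<in> {p\<in>AP. (\<lambda>(f, g). sx f + sx g) p = b} \<longleftrightarrow> p \<in> {(f, g), (g, f)}"
    proof
      assume "p \<in> {p\<in>AP. (\<lambda>(f, g). sx f + sx g) p = b}"
      then have a: "adj f' g'" and e: "sx f' + sx g' = sx f + sx g" using p b by (auto simp: AP_def)
      then have "(f' = f \<and> g' = g) \<or> (f' = g \<and> g' = f)" using pair_eq[OF adj_ne[OF a] ne] by simp
      then show "p \<in> {(f, g), (g, f)}" using p by auto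
    next
      assume "p \<in> {(f, g), (g, f)}"
      then show "p \<in> {p\<in>AP. (\<lambda>(f, g). sx f + sx g) p = b}"
        using fg adj_sym[of f g] b by (auto simp: AP_def add.commute)
    qed
  qed
  then show "card {p\<in>AP. (\<lambda>(f, g). sx f + sx g) p = b} = 2" using ne by simp
qed

lemma nu_inj: "inj_on nu AP"
proof (rule inj_onI)
  fix p q assume p: "p \<in> AP" and q: "q \<in> AP" and e: "nu p = nu q"
  obtain f g where pe: "p = (f, g)" and fg: "f \<noteq> g" using p by (cases p) (auto simp: AP_def adj_def)
  obtain f' g' where qe: "q = (f', g')" and fg': "f' \<noteq> g'" using q by (cases q) (auto simp: AP_def adj_def)
  have e': "sx f + sx f + sx g = sx f' + sx f' + sx g'" using e pe qe by (simp add: nu_def)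
  have l1: "Poly_Mapping.lookup (sx f + sx f + sx g) f = Poly_Mapping.lookup (sx f' + sx f' + sx g') f"
    using e' by simp
  then have "f' = f" using fg fg' by (cases "f' = f"; cases "g' = f") (simp_all add: lookup_add lookup_sx)
  moreover have l2: "Poly_Mapping.lookup (sx f + sx f + sx g) g = Poly_Mapping.lookup (sx f' + sx f' + sx g') g"
    using e' by simp
  ultimately have "g' = g" using fg fg' by (cases "g' = g") (simp_all add: lookup_add lookup_sx)
  then show "p = q" using pe qe \<open>f' = f\<close> by simp
qed

lemma nu_mono_disj: "nu ` AP \<inter> mono ` D3 = {}"
proof (rule ccontr)
  assume "nu ` AP \<inter> mono ` D3 \<noteq> {}"
  then obtain p t where p: "p \<in> AP" and t: "t \<in> D3" and e: "nu p = mono t" by blast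
  obtain f g where pe: "p = (f, g)" and fg: "f \<noteq> g" using p by (cases p) (auto simp: AP_def adj_def)
  obtain a b c where te: "t = (a, b, c)" and d: "a \<noteq> b" "b \<noteq> c" "a \<noteq> c"
    using t by (cases t) (auto simp: D3_def)
  have "Poly_Mapping.lookup (nu p) f = 2" using pe fg by (simp add: nu_def lookup_add lookup_sx)
  moreover have "Poly_Mapping.lookup (mono t) f \<le> 1"
    using te d by (simp add: mono_def lookup_tri)
  ultimately show False using e by simp
qed

lemma finite_D3i: "finite D3i" using finite_D3 by (simp add: D3i_def)

lemma M3e_eq: "M3e = nu ` AP \<union> mono ` D3i"
proof (rule set_eqI)
  fix m
  show "m \<in> M3e \<longleftrightarrow> m \<in> nu ` AP \<union> mono ` D3i"
  proof
    assume "m \<in> M3e"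
    then obtain x f g where m: "m = sx x + (sx f + sx g)" and x: "x \<in> E" and fg: "adj f g"
      unfolding M3e_def by blast
    have fgE: "f \<in> E" "g \<in> E" "f \<noteq> g" using fg unfolding adj_def by auto
    show "m \<in> nu ` AP \<union> mono ` D3i"
    proof (cases "x = f")
      case True
      then have "m = nu (f, g)" using m by (simp add: nu_def add.assoc)
      then show ?thesis using fg by (auto simp: AP_def)
    next
      case xf: False
      show ?thesis
      proof (cases "x = g")
        case True
        then have "m = nu (g, f)" using m by (simp add: nu_def ac_simps)
        moreover have "(g, f) \<in> AP" using fg adj_sym by (auto simp: AP_def)
        ultimately show ?thesis by blast
      next
        case False
        then have "(x, f, g) \<in> D3i" using xf x fgE fg by (auto simp: D3i_def D3_def A23_def)
        moreover have "m = mono (x, f, g)" using m by (simp add: mono_def add.assoc)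
        ultimately show ?thesis by blast
      qed
    qed
  next
    assume "m \<in> nu ` AP \<union> mono ` D3i"
    then show "m \<in> M3e"
    proof
      assume "m \<in> nu ` AP"
      then obtain f g where fg: "adj f g" and m: "m = nu (f, g)" by (auto simp: AP_def)
      have "m = sx f + (sx f + sx g)" using m by (simp add: nu_def add.assoc)
      then show ?thesis using fg adj_E[OF fg] unfolding M3e_def by blast
    next
      assume "m \<in> mono ` D3i"
      then obtain f g h where t: "(f, g, h) \<in> D3i" and m: "m = sx f + sx g + sx h"
        by (auto simp: mono_def)
      have E3: "f \<in> E" "g \<in> E" "h \<in> E" using t by (auto simp: D3i_def D3_def)
      have "adj f g \<or> adj g h \<or> adj f h" using t by (auto simp: D3i_def A12_def A23_def A13_def)
      then show ?thesis
      proof (elim disjE)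
        assume a: "adj f g"
        have "m = sx h + (sx f + sx g)" using m by (simp add: ac_simps)
        then show ?thesis using a E3 unfolding M3e_def by blast
      next
        assume a: "adj g h"
        have "m = sx f + (sx g + sx h)" using m by (simp add: ac_simps)
        then show ?thesis using a E3 unfolding M3e_def by blast
      next
        assume a: "adj f h"
        have "m = sx g + (sx f + sx h)" using m by (simp add: ac_simps)
        then show ?thesis using a E3 unfolding M3e_def by blast
      qed
    qed
  qed
qed

lemma card_M3e: "card M3e = card AP + card (mono ` D3i)"
proof -
  have disj: "nu ` AP \<inter> mono ` D3i = {}" using nu_mono_disj by (auto simp: D3i_def)
  have "card M3e = card (nu ` AP) + card (mono ` D3i)"
    unfolding M3e_eq by (rule card_Un_disjoint) (use finite_AP finite_D3i disj in auto)
  also have "card (nu ` AP) = card AP" by (rule card_image[OF nu_inj])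
  finally show ?thesis .
qed

lemma card_D3i: "card D3i = 6 * card (mono ` D3i)"
proof (rule card_fibers[OF finite_D3i])
  fix b assume "b \<in> mono ` D3i"
  then obtain t0 where t0: "t0 \<in> D3i" "b = mono t0" by blast
  obtain f g h where t0e: "t0 = (f, g, h)" by (cases t0)
  have t: "(f, g, h) \<in> D3i" and b: "b = mono (f, g, h)" using t0 t0e by simp_all
  have d: "f \<noteq> g" "g \<noteq> h" "f \<noteq> h" and E3: "f \<in> E" "g \<in> E" "h \<in> E"
    using t by (auto simp: D3i_def D3_def)
  have ind: "adj f g \<or> adj g h \<or> adj f h" using t by (auto simp: D3i_def A12_def A23_def A13_def)
  let ?S = "{(f, g, h), (f, h, g), (g, f, h), (g, h, f), (h, f, g), (h, g, f)}"
  have "{t\<in>D3i. mono t = b} = ?S"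
  proof (rule set_eqI)
    fix t :: "'v set \<times> 'v set \<times> 'v set"
    obtain a b' c where te: "t = (a, b', c)" by (cases t)
    show "t \<in> {t\<in>D3i. mono t = b} \<longleftrightarrow> t \<in> ?S"
    proof
      assume "t \<in> {t\<in>D3i. mono t = b}"
      then have tD: "(a, b', c) \<in> D3i" and e: "sx a + sx b' + sx c = sx f + sx g + sx h"
        using te b by (auto simp: mono_def)
      have d': "a \<noteq> b'" "b' \<noteq> c" "a \<noteq> c" using tD by (auto simp: D3i_def D3_def)
      have "{a, b', c} = {f, g, h}" using e tri_eq[OF d' d] by simp
      then show "t \<in> ?S" using perm3[OF d'] te by simp
    next
      assume tS: "t \<in> ?S"
      have "t \<in> D3" using tS d E3 by (auto simp: D3_def)
      moreover have "A12 t \<or> A23 t \<or> A13 t"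
        using tS ind adj_sym by (auto simp: A12_def A23_def A13_def)
      moreover have "mono t = b" using tS b by (auto simp: mono_def ac_simps)
      ultimately show "t \<in> {t\<in>D3i. mono t = b}" by (simp add: D3i_def)
    qed
  qed
  then show "card {t\<in>D3i. mono t = b} = 6" using d by simp
qed

lemma cnt_A12: "card {t\<in>D3. A12 t} + 2 * card AP = card AP * card E"
proof -
  let ?m = "\<lambda>x :: ('v set \<times> 'v set) \<times> 'v set. (fst (fst x), snd (fst x), snd x)"
  let ?S = "SIGMA p:AP. E - {fst p, snd p}"
  have inj: "inj_on ?m ?S" by (rule inj_onI) (simp add: prod_eq_iff)
  have img: "?m ` ?S = {t\<in>D3. A12 t}"
  proof
    show "?m ` ?S \<subseteq> {t\<in>D3. A12 t}"
    proof
      fix t assume "t \<in> ?m ` ?S"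
      then obtain x where x: "x \<in> ?S" "t = ?m x" by blast
      obtain f g h where xe: "x = ((f, g), h)" by (cases x) (metis surj_pair)
      have "adj f g" "h \<in> E" "h \<noteq> f" "h \<noteq> g" using x(1) xe by (auto simp: AP_def)
      then show "t \<in> {t\<in>D3. A12 t}" using x(2) xe by (auto simp: D3_def A12_def adj_def)
    qed
    show "{t\<in>D3. A12 t} \<subseteq> ?m ` ?S"
    proof
      fix t assume t: "t \<in> {t\<in>D3. A12 t}"
      obtain f g h where te: "t = (f, g, h)" by (cases t)
      have "adj f g" "h \<in> E" "h \<noteq> f" "h \<noteq> g" using t te by (auto simp: D3_def A12_def)
      then have mem: "((f, g), h) \<in> ?S" by (auto simp: AP_def)
      have teq: "t = ?m ((f, g), h)" using te by simp
      show "t \<in> ?m ` ?S" using teq mem by (intro image_eqI[where x="((f, g), h)"]) simp_all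
    qed
  qed
  have "card {t\<in>D3. A12 t} = card ?S" using card_image[OF inj] img by simp
  also have "\<dots> = (\<Sum>p\<in>AP. card (E - {fst p, snd p}))"
    by (rule card_SigmaI) (use finite_AP finE in auto)
  also have "\<dots> = (\<Sum>p\<in>AP. card E - 2)"
  proof (rule sum.cong[OF refl])
    fix p assume "p \<in> AP"
    then have "fst p \<in> E" "snd p \<in> E" "fst p \<noteq> snd p" by (auto simp: AP_def adj_def)
    then show "card (E - {fst p, snd p}) = card E - 2" using finE by (simp add: card_Diff_subset)
  qed
  also have "\<dots> = card AP * (card E - 2)" by simp
  finally have c: "card {t\<in>D3. A12 t} = card AP * (card E - 2)" .
  show ?thesis
  proof (cases "AP = {}")
    case True then show ?thesis using c by simp
  next
    case False
    then obtain f g where "adj f g" by (auto simp: AP_def)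
    then have sub: "{f, g} \<subseteq> E" and ne: "f \<noteq> g" by (auto simp: adj_def)
    have "card {f, g} \<le> card E" by (rule card_mono[OF finE sub])
    then have n2: "2 \<le> card E" using ne by simp
    have "card AP * (card E - 2) + 2 * card AP = card AP * (card E - 2 + 2)"
      by (simp only: add_mult_distrib2 mult.commute)
    also have "card E - 2 + 2 = card E" using n2 by simp
    finally show ?thesis using c by simp
  qed
qed

lemma cnt_C1: "card {t\<in>D3. A12 t \<and> A13 t} = (\<Sum>e\<in>E. card (N e) * (card (N e) - 1))"
proof -
  have finN: "finite (N e)" for e
    by (rule finite_subset[of _ E]) (auto simp: N_def adj_def finE)
  have eq: "{t\<in>D3. A12 t \<and> A13 t} = (SIGMA e:E. {(f, h). f \<in> N e \<and> h \<in> N e \<and> f \<noteq> h})"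
  proof (rule set_eqI)
    fix t :: "'v set \<times> 'v set \<times> 'v set"
    obtain e f h where te: "t = (e, f, h)" by (cases t)
    show "t \<in> {t\<in>D3. A12 t \<and> A13 t} \<longleftrightarrow> t \<in> (SIGMA e:E. {(f, h). f \<in> N e \<and> h \<in> N e \<and> f \<noteq> h})"
      using te by (auto simp: D3_def A12_def A13_def N_def adj_def)
  qed
  have "card {t\<in>D3. A12 t \<and> A13 t} = (\<Sum>e\<in>E. card {(f, h). f \<in> N e \<and> h \<in> N e \<and> f \<noteq> h})"
    unfolding eq
  proof (rule card_SigmaI)
    show "finite E" by (rule finE)
    show "\<forall>e\<in>E. finite {(f, h). f \<in> N e \<and> h \<in> N e \<and> f \<noteq> h}"
      using finN by (auto intro: finite_subset[of _ "N _ \<times> N _"])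
  qed
  also have "\<dots> = (\<Sum>e\<in>E. card (N e) * (card (N e) - 1))"
    using finN by (intro sum.cong refl) (rule card_pairs_distinct)
  finally show ?thesis .
qed

lemma cnt_tri: "card {t\<in>D3. A12 t \<and> A23 t \<and> A13 t} = (\<Sum>u\<in>V. vdeg E u * (vdeg E u - 1) * (vdeg E u - 2))"
proof -
  define Eu where "Eu u = {e\<in>E. u \<in> e}" for u
  define T where "T u = {(f, g, h). f \<in> Eu u \<and> g \<in> Eu u \<and> h \<in> Eu u \<and> f \<noteq> g \<and> g \<noteq> h \<and> f \<noteq> h}" for u
  have finEu: "finite (Eu u)" for u using finE by (simp add: Eu_def)
  have finT: "finite (T u)" for u
    by (rule finite_subset[of _ "Eu u \<times> Eu u \<times> Eu u"]) (auto simp: T_def finEu)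
  let ?S = "SIGMA u:V. T u"
  have inj: "inj_on snd ?S"
  proof (rule inj_onI)
    fix x y assume x: "x \<in> ?S" and y: "y \<in> ?S" and e: "snd x = snd y"
    obtain u t where xe: "x = (u, t)" by (cases x)
    obtain u' t' where ye: "y = (u', t')" by (cases y)
    obtain f g h where te: "t = (f, g, h)" by (cases t)
    have "f \<in> E" "g \<in> E" "f \<noteq> g" "u \<in> f" "u \<in> g" using x xe te by (auto simp: T_def Eu_def)
    moreover have "u' \<in> f" "u' \<in> g" using y ye e xe te by (auto simp: T_def Eu_def)
    ultimately have "u = u'" by (rule unique_common)
    then show "x = y" using xe ye e by simp
  qed
  have img: "snd ` ?S = {t\<in>D3. A12 t \<and> A23 t \<and> A13 t}"
  proof (rule set_eqI)
    fix t :: "'v set \<times> 'v set \<times> 'v set"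
    obtain f g h where te: "t = (f, g, h)" by (cases t)
    show "t \<in> snd ` ?S \<longleftrightarrow> t \<in> {t\<in>D3. A12 t \<and> A23 t \<and> A13 t}"
    proof
      assume "t \<in> snd ` ?S"
      then obtain u where "u \<in> V" "t \<in> T u" by force
      then show "t \<in> {t\<in>D3. A12 t \<and> A23 t \<and> A13 t}"
        using te by (auto simp: T_def Eu_def D3_def A12_def A23_def A13_def adj_def)
    next
      assume "t \<in> {t\<in>D3. A12 t \<and> A23 t \<and> A13 t}"
      then have a: "adj f g" "adj g h" "adj f h" and d: "t \<in> D3"
        using te by (auto simp: A12_def A23_def A13_def)
      obtain u where u: "u \<in> f" "u \<in> g" "u \<in> h" using common_vertex[OF a] by blast
      have "f \<in> E" using a by (auto simp: adj_def)
      then have "u \<in> V" using u E_sub by blast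
      moreover have "t \<in> T u" using d te u by (auto simp: T_def Eu_def D3_def)
      ultimately show "t \<in> snd ` ?S" by force
    qed
  qed
  have "card {t\<in>D3. A12 t \<and> A23 t \<and> A13 t} = card ?S" using card_image[OF inj] img by simp
  also have "\<dots> = (\<Sum>u\<in>V. card (T u))" by (rule card_SigmaI) (use finV finT in auto)
  also have "\<dots> = (\<Sum>u\<in>V. vdeg E u * (vdeg E u - 1) * (vdeg E u - 2))"
  proof (rule sum.cong[OF refl])
    fix u
    show "card (T u) = vdeg E u * (vdeg E u - 1) * (vdeg E u - 2)"
      unfolding T_def vdeg_def Eu_def[symmetric] by (rule card_triples_distinct[OF finEu])
  qed
  finally show ?thesis .
qed

lemma rot_A12: "A12 (rot t) = A23 t" by (cases t) (simp add: rot_def A12_def A23_def)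
lemma sw23_A12: "A12 (sw23 t) = A13 t" by (cases t) (simp add: sw23_def A12_def A13_def)
lemma sw12_C1: "(A12 (sw12 t) \<and> A13 (sw12 t)) = (A12 t \<and> A23 t)"
  by (cases t) (auto simp: sw12_def A12_def A13_def A23_def adj_sym)
lemma rot2_C1: "(A12 ((rot \<circ> rot) t) \<and> A13 ((rot \<circ> rot) t)) = (A13 t \<and> A23 t)"
  by (cases t) (auto simp: rot_def A12_def A13_def A23_def adj_sym)

lemma bool_identity:
  "(of_bool a + of_bool b + of_bool c - of_bool (a \<or> b \<or> c) :: int)
   = of_bool (a \<and> c) + of_bool (a \<and> b) + of_bool (c \<and> b) - of_bool (a \<and> b \<and> c)"
  by (cases a; cases b; cases c) simp_all

lemma comb_main:
  "int (card G0e) * int (card E) - int (card M3e)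
   = (\<Sum>e\<in>E. int ((\<Sum>u\<in>e. vdeg E u) - 2 choose 2)) - (\<Sum>u\<in>V. int (vdeg E u choose 3))"
proof -
  define I where "I Q = (\<Sum>t\<in>D3. of_bool (Q t) :: int)" for Q
  have I_card: "I Q = int (card {t\<in>D3. Q t})" for Q
    unfolding I_def by (rule sum_of_bool_card[OF finite_D3])
  have P2: "int (card AP) = 2 * int (card G0e)" using card_AP by simp
  have M: "int (card M3e) = int (card AP) + int (card (mono ` D3i))" using card_M3e by simp
  have D: "I (\<lambda>t. A12 t \<or> A23 t \<or> A13 t) = 6 * int (card (mono ` D3i))"
    using card_D3i I_card[of "\<lambda>t. A12 t \<or> A23 t \<or> A13 t"] by (simp add: D3i_def)
  have A: "I A12 = int (card AP) * int (card E) - 2 * int (card AP)"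
  proof -
    have "int (card {t\<in>D3. A12 t}) + 2 * int (card AP) = int (card AP) * int (card E)"
      using arg_cong[OF cnt_A12, of int] by simp
    then show ?thesis using I_card[of A12] by simp
  qed
  have S23: "I A23 = I A12"
    unfolding I_def using sum_reindex_D3[OF bij_rot, of "\<lambda>t. of_bool (A12 t)"] by (simp add: rot_A12)
  have S13: "I A13 = I A12"
    unfolding I_def using sum_reindex_D3[OF bij_sw23, of "\<lambda>t. of_bool (A12 t)"] by (simp add: sw23_A12)
  have SC2: "I (\<lambda>t. A12 t \<and> A23 t) = I (\<lambda>t. A12 t \<and> A13 t)"
    unfolding I_def using sum_reindex_D3[OF bij_sw12, of "\<lambda>t. of_bool (A12 t \<and> A13 t)"]
    by (simp add: sw12_C1)
  have SC3: "I (\<lambda>t. A13 t \<and> A23 t) = I (\<lambda>t. A12 t \<and> A13 t)"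
    unfolding I_def using sum_reindex_D3[OF bij_betw_trans[OF bij_rot bij_rot], of "\<lambda>t. of_bool (A12 t \<and> A13 t)"]
    by (simp add: rot2_C1 del: comp_apply)
  have key: "I A12 + I A23 + I A13 - I (\<lambda>t. A12 t \<or> A23 t \<or> A13 t)
      = I (\<lambda>t. A12 t \<and> A13 t) + I (\<lambda>t. A12 t \<and> A23 t) + I (\<lambda>t. A13 t \<and> A23 t) - I (\<lambda>t. A12 t \<and> A23 t \<and> A13 t)"
  proof -
    have "(\<Sum>t\<in>D3. of_bool (A12 t) + of_bool (A23 t) + of_bool (A13 t) - of_bool (A12 t \<or> A23 t \<or> A13 t) :: int)
        = (\<Sum>t\<in>D3. of_bool (A12 t \<and> A13 t) + of_bool (A12 t \<and> A23 t) + of_bool (A13 t \<and> A23 t) - of_bool (A12 t \<and> A23 t \<and> A13 t))"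
      by (rule sum.cong[OF refl]) (rule bool_identity)
    then show ?thesis unfolding I_def by (simp only: sum.distrib sum_subtractf)
  qed
  have C1: "I (\<lambda>t. A12 t \<and> A13 t) = 2 * (\<Sum>e\<in>E. int ((\<Sum>u\<in>e. vdeg E u) - 2 choose 2))"
  proof -
    have "I (\<lambda>t. A12 t \<and> A13 t) = int (\<Sum>e\<in>E. card (N e) * (card (N e) - 1))"
      using I_card cnt_C1 by simp
    also have "\<dots> = (\<Sum>e\<in>E. int (2 * ((\<Sum>u\<in>e. vdeg E u) - 2 choose 2)))"
      unfolding of_nat_sum by (intro sum.cong refl) (simp add: N_card choose2)
    finally show ?thesis by (simp add: sum_distrib_left)
  qed
  have T: "I (\<lambda>t. A12 t \<and> A23 t \<and> A13 t) = 6 * (\<Sum>u\<in>V. int (vdeg E u choose 3))"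
  proof -
    have "I (\<lambda>t. A12 t \<and> A23 t \<and> A13 t) = int (\<Sum>u\<in>V. vdeg E u * (vdeg E u - 1) * (vdeg E u - 2))"
      using I_card cnt_tri by simp
    also have "\<dots> = (\<Sum>u\<in>V. int (6 * (vdeg E u choose 3)))"
      unfolding of_nat_sum by (intro sum.cong refl) (simp only: choose3)
    finally show ?thesis by (simp add: sum_distrib_left)
  qed
  have "6 * (int (card G0e) * int (card E) - int (card M3e))
      = 6 * ((\<Sum>e\<in>E. int ((\<Sum>u\<in>e. vdeg E u) - 2 choose 2)) - (\<Sum>u\<in>V. int (vdeg E u choose 3)))"
    using key A S23 S13 SC2 SC3 C1 T D M P2 by (simp add: algebra_simps)
  then show ?thesis by simp
qed

end


lemma tree_comb:
  assumes "is_tree V E"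
  shows "comb V E"
proof
  have sg: "simple_graph V E" and ac: "graph_acyclic V E" using assms by (auto simp: is_tree_def)
  show "finite V" using sg by (simp add: simple_graph_def)
  show "\<And>e. e \<in> E \<Longrightarrow> \<exists>x y. x \<in> V \<and> y \<in> V \<and> x \<noteq> y \<and> e = {x, y}"
    using sg by (simp add: simple_graph_def)
  fix a b c assume ab: "{a, b} \<in> E" and bc: "{b, c} \<in> E" and ca: "{c, a} \<in> E"
    and d: "a \<noteq> b" "b \<noteq> c" "a \<noteq> c"
  have EV: "\<And>e x. e \<in> E \<Longrightarrow> x \<in> e \<Longrightarrow> x \<in> V" using sg by (auto simp: simple_graph_def)
  have V3: "set [a, b, c] \<subseteq> V" using EV[OF ab] EV[OF bc] by auto
  have cyc: "\<forall>i < length [a, b, c]. {[a, b, c] ! i, [a, b, c] ! ((i + 1) mod length [a, b, c])} \<in> E"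
  proof (intro allI impI)
    fix i assume "i < length [a, b, c]"
    then have "i = 0 \<or> i = 1 \<or> i = 2" by auto
    then show "{[a, b, c] ! i, [a, b, c] ! ((i + 1) mod length [a, b, c])} \<in> E"
      using ab bc ca by auto
  qed
  have "3 \<le> length [a, b, c]" "distinct [a, b, c]" using d by auto
  then show False using ac V3 cyc unfolding graph_acyclic_def by blast
qed

theorem proposition2p17:
  fixes V :: "'v set" and E :: "'v set set"
    and r :: "nat \<Rightarrow> nat" and a :: "nat \<Rightarrow> nat \<Rightarrow> int"
    and M :: "nat \<Rightarrow> nat \<Rightarrow> nat \<Rightarrow> ('v set, 'k::field) mpoly"
  assumes "is_tree V E"
    and "min_graded_free_res E (line_edge_ideal E) r a M"
  shows "int (card {j. j < r 2 \<and> a 2 j = 3}) =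
           (\<Sum>e\<in>E. int (((\<Sum>u\<in>e. vdeg E u) - 2) choose 2)) - (\<Sum>u\<in>V. int (vdeg E u choose 3))"
proof -
  interpret C: comb V E by (rule tree_comb[OF assms(1)])
  interpret R: mres E r a M using assms(2) C.finE by unfold_locales
  have inj1: "inj (\<lambda>m. Poly_Mapping.single m (1::'k))" by (rule injI) simp
  have vm: "var f * var g = Poly_Mapping.single (sx f + sx g) (1::'k)" for f g
    by (simp add: var_mult sx_def)
  have vm3: "var x * (var f * var g) = Poly_Mapping.single (sx x + (sx f + sx g)) (1::'k)" for x f g
    by (simp add: var_def sx_def mult_single)
  have G0: "R.G0 = (\<lambda>m. Poly_Mapping.single m 1) ` C.G0e"
  proof
    show "R.G0 \<subseteq> (\<lambda>m. Poly_Mapping.single m 1) ` C.G0e"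
    proof
      fix p :: "('v set, 'k) mpoly" assume "p \<in> R.G0"
      then obtain f g where fg: "C.adj f g" and p: "p = var f * var g"
        unfolding R.G0_def C.adj_def by blast
      have "(f, g) \<in> C.AP" using fg by (simp add: C.AP_def)
      then have mem: "sx f + sx g \<in> C.G0e" unfolding C.G0e_def by (rule rev_image_eqI) simp
      show "p \<in> (\<lambda>m. Poly_Mapping.single m 1) ` C.G0e" by (rule rev_image_eqI[OF mem]) (simp add: p vm)
    qed
    show "(\<lambda>m. Poly_Mapping.single m 1) ` C.G0e \<subseteq> R.G0"
    proof
      fix p :: "('v set, 'k) mpoly" assume "p \<in> (\<lambda>m. Poly_Mapping.single m 1) ` C.G0e"
      then obtain m where m: "m \<in> C.G0e" "p = Poly_Mapping.single m 1" by blast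
      then obtain q where q: "q \<in> C.AP" "m = (\<lambda>(f, g). sx f + sx g) q" unfolding C.G0e_def by blast
      obtain f g where qe: "q = (f, g)" by (cases q)
      have fg: "C.adj f g" using q qe by (simp add: C.AP_def)
      have p: "p = var f * var g" using m q qe by (simp add: vm)
      show "p \<in> R.G0" using fg p unfolding R.G0_def C.adj_def by blast
    qed
  qed
  have M3: "R.Mon3 = (\<lambda>m. Poly_Mapping.single m 1) ` C.M3e"
  proof
    show "R.Mon3 \<subseteq> (\<lambda>m. Poly_Mapping.single m 1) ` C.M3e"
    proof
      fix p :: "('v set, 'k) mpoly" assume "p \<in> R.Mon3"
      then obtain x f g where x: "x \<in> E" and fg: "C.adj f g" and p: "p = var x * (var f * var g)"
        unfolding R.Mon3_def R.G0_def C.adj_def by blast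
      have "sx x + (sx f + sx g) \<in> C.M3e" using x fg unfolding C.M3e_def by blast
      then show "p \<in> (\<lambda>m. Poly_Mapping.single m 1) ` C.M3e" by (rule rev_image_eqI) (simp add: p vm3)
    qed
    show "(\<lambda>m. Poly_Mapping.single m 1) ` C.M3e \<subseteq> R.Mon3"
    proof
      fix p :: "('v set, 'k) mpoly" assume "p \<in> (\<lambda>m. Poly_Mapping.single m 1) ` C.M3e"
      then obtain m where m: "m \<in> C.M3e" "p = Poly_Mapping.single m 1" by blast
      then obtain x f g where x: "x \<in> E" and fg: "C.adj f g" and me: "m = sx x + (sx f + sx g)"
        unfolding C.M3e_def by blast
      have p: "p = Poly_Mapping.single (sx x + (sx f + sx g)) 1" using m me by simp
      have "var f * var g \<in> R.G0" using fg unfolding R.G0_def C.adj_def by blast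
      moreover have "p = var x * (var f * var g)" using p by (simp add: vm3)
      ultimately show "p \<in> R.Mon3" using x unfolding R.Mon3_def by blast
    qed
  qed
  have cG: "card R.G0 = card C.G0e" unfolding G0 by (rule card_image[OF inj_on_subset[OF inj1]]) simp
  have cM: "card R.Mon3 = card C.M3e" unfolding M3 by (rule card_image[OF inj_on_subset[OF inj1]]) simp
  have "card R.J3 + card R.Mon3 = card R.G0 * card E" by (rule R.main_count)
  then have "int (card R.J3) = int (card C.G0e) * int (card E) - int (card C.M3e)"
  proof -
    have "int (card R.J3) + int (card C.M3e) = int (card C.G0e) * int (card E)"
      using arg_cong[OF \<open>card R.J3 + card R.Mon3 = card R.G0 * card E\<close>, of int] cG cM by simp
    then show ?thesis by simp
  qed
  also have "\<dots> = (\<Sum>e\<in>E. int ((\<Sum>u\<in>e. vdeg E u) - 2 choose 2)) - (\<Sum>u\<in>V. int (vdeg E u choose 3))"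
    by (rule C.comb_main)
  finally show ?thesis unfolding R.J3_def .
qed


end
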